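(* Let $n,N\in\mathbb N$, $\mathcal G=(\mathbb H^n)^N$, let $d\in C^\infty(\mathcal G\setminus\{0\})$ be a homogeneous norm, and fix $p\ge2$, $\theta\in\mathbb R$. With \[ Z_d=\frac{n+1}{n}\,\frac{z}{d}-\frac{p\theta}{2n}\,\frac{1}{d^2}\sum_{j=1}^Nt_j\,\nabla^{(j)\perp}d, \] every $u\in C_c^\infty(\mathcal G\setminus\{0\})$ satisfies \[ \int_{\mathcal G}\frac{|\langle\nabla_{\mathcal G}u,Z_d\rangle|^p}{d^{p(\theta-1)}}\,dz\,dt\ge\left|\frac{Q-p\theta}{p}\right|^p\int_{\mathcal G}\frac{|u|^p}{d^{p\theta}}\,dz\,dt . \]
   Context: $\mathcal G=(\mathbb H^n)^N$ is $\mathbb R^{2nN}\times\mathbb R^N$ with coordinates $z=(z^{(1)},\dots,z^{(N)})$, $z^{(j)}\in\mathbb R^{2n}$, $t=(t_1,\dots,t_N)$; group law $(z,t)\circ(\eta,\tau)=(z+\eta,t+\tau+\tfrac12(\langle B_{\mathbb H}z^{(1)},\eta^{(1)}\rangle,\dots,\langle B_{\mathbb H}z^{(N)},\eta^{(N)}\rangle))$ with $B_{\mathbb H}=\mathrm{diag}\left(\begin{pmatrix}0&4\\-4&0\end{pmatrix},\dots\right)\in\mathbb R^{2n\times2n}$; dilations $\delta_\gamma(z,t)=(\gamma z,\gamma^2t)$; $Q=2N(n+1)$. Horizontal fields $X^{(j)}_{2i-1}=\partial_{z^{(j)}_{2i-1}}+2z^{(j)}_{2i}\partial_{t_j}$,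 $X^{(j)}_{2i}=\partial_{z^{(j)}_{2i}}-2z^{(j)}_{2i-1}\partial_{t_j}$; $\nabla_{\mathcal G}$ is the vector of all of them; horizontal vector fields are identified with $\mathbb R^{2nN}$-valued functions via this basis. $\nabla^{(j)\perp}d$ has components $(-X^{(j)}_2d,X^{(j)}_1d,\dots,-X^{(j)}_{2n}d,X^{(j)}_{2n-1}d)$ in the $j$-th block and zero elsewhere. A homogeneous norm is a continuous $d\ge0$ with $d(\delta_\lambda(z,t))=\lambda d(z,t)$, $d>0$ off the origin, and satisfying the triangle inequality $d((z,t)\circ(\eta,\tau))\le d(z,t)+d(\eta,\tau)$. *)

theory Defs
  imports "HOL-Analysis.Analysis"
begin

text \<open>Points of G = (H^n)^N: pairs (z,t), z with z $ j $ i $ 1 = z^(j)_(2i-1),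
  z $ j $ i $ 2 = z^(j)_(2i); t $ j = t_j.  n = CARD('n), N = CARD('N).\<close>

type_synonym ('n, 'N) grp = "(real^2^'n^'N) \<times> (real^'N)"

definition Bform :: "real^2^'n \<Rightarrow> real^2^'n \<Rightarrow> real" where
  "Bform z \<eta> = (\<Sum>i\<in>UNIV. 4 * z$i$2 * \<eta>$i$1 - 4 * z$i$1 * \<eta>$i$2)"

definition gmult :: "('n::finite,'N::finite) grp \<Rightarrow> ('n,'N) grp \<Rightarrow> ('n,'N) grp" where
  "gmult x y = (fst x + fst y,
     snd x + snd y + (\<chi> j. (1/2) * Bform (fst x $ j) (fst y $ j)))"

definition dil :: "real \<Rightarrow> ('n::finite,'N::finite) grp \<Rightarrow> ('n,'N) grp" where
  "dil \<gamma> x = (\<gamma> *\<^sub>R fst x, (\<gamma>^2) *\<^sub>R snd x)"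

definition hom_norm :: "(('n::finite,'N::finite) grp \<Rightarrow> real) \<Rightarrow> bool" where
  "hom_norm d \<longleftrightarrow> continuous_on UNIV d \<and> (\<forall>x. d x \<ge> 0)
     \<and> (\<forall>r>0. \<forall>x. d (dil r x) = r * d x)
     \<and> (\<forall>x. x \<noteq> 0 \<longrightarrow> d x > 0)
     \<and> (\<forall>x y. d (gmult x y) \<le> d x + d y)"

fun Ck_on :: "nat \<Rightarrow> 'a::euclidean_space set \<Rightarrow> ('a \<Rightarrow> real) \<Rightarrow> bool" where
  "Ck_on 0 S f = continuous_on S f"
| "Ck_on (Suc k) S f = (f differentiable_on S \<and>
      (\<forall>b\<in>Basis. Ck_on k S (\<lambda>x. frechet_derivative f (at x) b)))"

definition smooth_on :: "'a::euclidean_space set \<Rightarrow> ('a \<Rightarrow> real) \<Rightarrow> bool" where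
  "smooth_on S f \<longleftrightarrow> (\<forall>k. Ck_on k S f)"

definition Cc_inf :: "'a::euclidean_space set \<Rightarrow> ('a \<Rightarrow> real) \<Rightarrow> bool" where
  "Cc_inf S u \<longleftrightarrow> smooth_on S u \<and> compact (closure {x. u x \<noteq> 0})
      \<and> closure {x. u x \<noteq> 0} \<subseteq> S"

definition zvec :: "'N \<Rightarrow> 'n \<Rightarrow> 2 \<Rightarrow> ('n::finite,'N::finite) grp" where
  "zvec j i k = ((\<chi> j'. \<chi> i'. \<chi> k'. if j' = j \<and> i' = i \<and> k' = k then 1 else 0), 0)"

definition tvec :: "'N \<Rightarrow> ('n::finite,'N::finite) grp" where
  "tvec j = (0, axis j 1)"

text \<open>Horizontal fields: X^(j)_(2i-1) (k = 1) and X^(j)_(2i) (k = 2).\<close>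
definition Xf :: "'N \<Rightarrow> 'n \<Rightarrow> 2 \<Rightarrow> (('n::finite,'N::finite) grp \<Rightarrow> real) \<Rightarrow> ('n,'N) grp \<Rightarrow> real" where
  "Xf j i k f x = frechet_derivative f (at x) (zvec j i k)
     + (if k = 1 then 2 * fst x $ j $ i $ 2 else - 2 * fst x $ j $ i $ 1)
       * frechet_derivative f (at x) (tvec j)"

definition hgrad :: "(('n::finite,'N::finite) grp \<Rightarrow> real) \<Rightarrow> ('n,'N) grp \<Rightarrow> real^2^'n^'N" where
  "hgrad f x = (\<chi> j. \<chi> i. \<chi> k. Xf j i k f x)"

definition hperp :: "'N \<Rightarrow> (('n::finite,'N::finite) grp \<Rightarrow> real) \<Rightarrow> ('n,'N) grp \<Rightarrow> real^2^'n^'N" where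
  "hperp j f x = (\<chi> j'. \<chi> i. \<chi> k. if j' = j then
       (if k = 1 then - Xf j i 2 f x else Xf j i 1 f x) else 0)"

definition Zfield :: "real \<Rightarrow> real \<Rightarrow> (('n::finite,'N::finite) grp \<Rightarrow> real) \<Rightarrow> ('n,'N) grp \<Rightarrow> real^2^'n^'N" where
  "Zfield p \<theta> d x =
     ((real CARD('n) + 1) / real CARD('n)) *\<^sub>R ((1 / d x) *\<^sub>R fst x)
     - (p * \<theta> / (2 * real CARD('n))) *\<^sub>R ((1 / (d x)^2) *\<^sub>R (\<Sum>j\<in>UNIV. (snd x $ j) *\<^sub>R hperp j d x))"

end

theory Submission
  imports Defs
begin

definition pd :: "('a::real_normed_vector \<Rightarrow> real) \<Rightarrow> 'a \<Rightarrow> 'a \<Rightarrow> real" where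
  "pd f v x = frechet_derivative f (at x) v"

lemma pd_has: "(f has_derivative f') (at x) \<Longrightarrow> pd f v x = f' v"
  unfolding pd_def by (metis frechet_derivative_at)

lemma pd_works: "f differentiable (at x) \<Longrightarrow> (f has_derivative (\<lambda>v. pd f v x)) (at x)"
  unfolding pd_def using frechet_derivative_works by (metis eta_contract_eq)

lemma pd_linear: "f differentiable (at x) \<Longrightarrow> linear (\<lambda>v. pd f v x)"
  using pd_works has_derivative_linear by blast

lemma pd_add: "f differentiable (at x) \<Longrightarrow> g differentiable (at x) \<Longrightarrow>
  pd (\<lambda>y. f y + g y) v x = pd f v x + pd g v x"
  by (rule pd_has) (intro has_derivative_add pd_works)

lemma pd_diff: "f differentiable (at x) \<Longrightarrow> g differentiable (at x) \<Longrightarrow>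
  pd (\<lambda>y. f y - g y) v x = pd f v x - pd g v x"
  by (rule pd_has) (intro has_derivative_diff pd_works)

lemma pd_mult: "f differentiable (at x) \<Longrightarrow> g differentiable (at x) \<Longrightarrow>
  pd (\<lambda>y. f y * g y) v x = f x * pd g v x + pd f v x * g x"
  by (rule pd_has) (intro has_derivative_mult pd_works)

lemma pd_cmult: "f differentiable (at x) \<Longrightarrow> pd (\<lambda>y. c * f y) v x = c * pd f v x"
  by (rule pd_has) (intro has_derivative_mult_right pd_works)

lemma pd_uminus: "f differentiable (at x) \<Longrightarrow> pd (\<lambda>y. - f y) v x = - pd f v x"
  by (rule pd_has) (intro has_derivative_minus pd_works)

lemma pd_const: "pd (\<lambda>y. c) v x = 0"
  by (rule pd_has) (rule has_derivative_const)

lemma pd_bl: "bounded_linear L \<Longrightarrow> pd L v x = L v"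
  by (rule pd_has) (erule bounded_linear_imp_has_derivative)

lemma pd_comp:
  assumes "(h has_real_derivative h') (at (f x))" "f differentiable (at x)"
  shows "pd (\<lambda>y. h (f y)) v x = h' * pd f v x"
proof -
  have "((\<lambda>y. h (f y)) has_derivative (\<lambda>v. h' * pd f v x)) (at x)"
    using has_derivative_compose[OF pd_works[OF assms(2)] assms(1)[unfolded has_field_derivative_def]]
    by (simp add: o_def mult.commute)
  then show ?thesis by (rule pd_has)
qed

lemma differentiable_comp_real:
  assumes "(h has_real_derivative h') (at (f x))" "f differentiable (at x)"
  shows "(\<lambda>y. h (f y)) differentiable (at x)"
  using has_derivative_compose[OF pd_works[OF assms(2)] assms(1)[unfolded has_field_derivative_def]]
  unfolding differentiable_def o_def by blast

definition C1 :: "'a::real_normed_vector set \<Rightarrow> ('a \<Rightarrow> real) \<Rightarrow> bool" where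
  "C1 S f \<longleftrightarrow> (\<forall>x\<in>S. f differentiable (at x)) \<and> (\<forall>v. continuous_on S (pd f v))"

lemma C1_diffE: "C1 S f \<Longrightarrow> x \<in> S \<Longrightarrow> f differentiable (at x)"
  unfolding C1_def by blast

lemma C1_contpd: "C1 S f \<Longrightarrow> continuous_on S (pd f v)"
  unfolding C1_def by blast

lemma C1_cont: "C1 S f \<Longrightarrow> continuous_on S f"
  unfolding C1_def
  by (meson continuous_at_imp_continuous_on differentiable_imp_continuous_within)

lemma C1_const: "C1 S (\<lambda>y. c)"
  unfolding C1_def by (simp add: pd_const)

lemma C1_bl: "bounded_linear L \<Longrightarrow> C1 S L"
  unfolding C1_def by (auto simp: pd_bl bounded_linear_imp_differentiable)

lemma C1_add: "C1 S f \<Longrightarrow> C1 S g \<Longrightarrow> C1 S (\<lambda>y. f y + g y)"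
  unfolding C1_def
  apply (auto intro!: differentiable_add)
  apply (rule continuous_on_cong[THEN iffD1, OF refl _ continuous_on_add[of S "pd f v" "pd g v" for v]])
    apply (auto simp: pd_add)
  done

lemma C1_diff: "C1 S f \<Longrightarrow> C1 S g \<Longrightarrow> C1 S (\<lambda>y. f y - g y)"
  unfolding C1_def
  apply (auto intro!: differentiable_diff)
  apply (rule continuous_on_cong[THEN iffD1, OF refl _ continuous_on_diff[of S "pd f v" "pd g v" for v]])
    apply (auto simp: pd_diff)
  done

lemma C1_mult: "C1 S f \<Longrightarrow> C1 S g \<Longrightarrow> C1 S (\<lambda>y. f y * g y)"
proof -
  assume f: "C1 S f" and g: "C1 S g"
  show ?thesis unfolding C1_def
  proof (intro conjI ballI allI)
    fix x assume "x \<in> S" then show "(\<lambda>y. f y * g y) differentiable (at x)"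
      using f g by (metis C1_diffE differentiable_mult)
  next
    fix v
    have "continuous_on S (\<lambda>x. f x * pd g v x + pd f v x * g x)"
      using f g by (intro continuous_intros C1_cont C1_contpd)
    then show "continuous_on S (pd (\<lambda>y. f y * g y) v)"
      by (rule continuous_on_cong[THEN iffD1, OF refl, rotated]) (use f g in \<open>auto simp: pd_mult C1_diffE\<close>)
  qed
qed

lemma C1_sum: "finite A \<Longrightarrow> (\<And>a. a \<in> A \<Longrightarrow> C1 S (f a)) \<Longrightarrow> C1 S (\<lambda>y. \<Sum>a\<in>A. f a y)"
  by (induction A rule: finite_induct) (auto intro: C1_const C1_add)

lemma C1_comp:
  assumes f: "C1 S f" and h: "\<And>x. x \<in> S \<Longrightarrow> (h has_real_derivative h' (f x)) (at (f x))"
    and c: "continuous_on (f ` S) h'"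
  shows "C1 S (\<lambda>y. h (f y))"
  unfolding C1_def
proof (intro conjI ballI allI)
  fix x assume x: "x \<in> S" show "(\<lambda>y. h (f y)) differentiable (at x)"
    by (rule differentiable_comp_real[OF h[OF x] C1_diffE[OF f x]])
next
  fix v
  have "continuous_on S (\<lambda>x. h' (f x) * pd f v x)"
    using f c by (intro continuous_intros C1_contpd continuous_on_compose2[OF c] C1_cont) auto
  moreover have "pd (\<lambda>y. h (f y)) v x = h' (f x) * pd f v x" if x: "x \<in> S" for x
    by (rule pd_comp[OF h[OF x] C1_diffE[OF f x]])
  ultimately show "continuous_on S (pd (\<lambda>y. h (f y)) v)"
    using continuous_on_cong[of S S "pd (\<lambda>y. h (f y)) v" "\<lambda>x. h' (f x) * pd f v x"] by simp
qed

lemma C1_cong: "open S \<Longrightarrow> C1 S f \<Longrightarrow> (\<And>x. x \<in> S \<Longrightarrow> f x = g x) \<Longrightarrow> C1 S g"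
proof -
  assume S: "open S" and f: "C1 S f" and e: "\<And>x. x \<in> S \<Longrightarrow> f x = g x"
  have pe: "pd f v x = pd g v x" if "x \<in> S" for v x
    unfolding pd_def using frechet_derivative_transform_within_open[OF C1_diffE[OF f that] S that e] by simp
  show ?thesis unfolding C1_def
  proof (intro conjI ballI allI)
    fix x assume x: "x \<in> S"
    show "g differentiable (at x)"
      using has_derivative_transform_within_open[OF pd_works[OF C1_diffE[OF f x]] S x e]
      unfolding differentiable_def by blast
  next
    fix v show "continuous_on S (pd g v)"
      using C1_contpd[OF f] by (rule continuous_on_cong[THEN iffD1, OF refl, rotated]) (simp add: pe)
  qed
qed


lemma Ck_cont: "Ck_on k S f \<Longrightarrow> continuous_on S f"
  by (cases k) (auto intro: differentiable_imp_continuous_on)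

lemma pd_basis_sum: "f differentiable (at x) \<Longrightarrow> pd f v x = (\<Sum>b\<in>Basis. (v \<bullet> b) * pd f b x)"
proof -
  assume "f differentiable (at x)"
  then have l: "linear (\<lambda>v. pd f v x)" by (rule pd_linear)
  have "pd f v x = pd f (\<Sum>b\<in>Basis. (v \<bullet> b) *\<^sub>R b) x" by (simp add: euclidean_representation)
  also have "\<dots> = (\<Sum>b\<in>Basis. pd f ((v \<bullet> b) *\<^sub>R b) x)"
    using linear_sum[OF l, of "\<lambda>b. (v \<bullet> b) *\<^sub>R b" Basis] by simp
  also have "\<dots> = (\<Sum>b\<in>Basis. (v \<bullet> b) * pd f b x)"
    using linear_scale[OF l] by simp
  finally show ?thesis .
qed

lemma C1_Ck: assumes "open S" "Ck_on (Suc k) S f" shows "C1 S f"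
  unfolding C1_def
proof (intro conjI ballI allI)
  fix x assume "x \<in> S" then show "f differentiable (at x)"
    using assms differentiable_on_eq_differentiable_at by auto
next
  fix v
  have c: "continuous_on S (pd f b)" if "b \<in> Basis" for b
    using assms(2) that by (auto simp: pd_def[abs_def] intro: Ck_cont)
  have "continuous_on S (\<lambda>x. \<Sum>b\<in>Basis. (v \<bullet> b) * pd f b x)"
    by (intro continuous_intros c)
  moreover have "pd f v x = (\<Sum>b\<in>Basis. (v \<bullet> b) * pd f b x)" if "x \<in> S" for x
    using assms differentiable_on_eq_differentiable_at that by (intro pd_basis_sum) auto
  ultimately show "continuous_on S (pd f v)"
    using continuous_on_cong[of S S "pd f v" "\<lambda>x. \<Sum>b\<in>Basis. (v \<bullet> b) * pd f b x"] by simp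
qed

lemma Ck_pd: "Ck_on (Suc k) S f \<Longrightarrow> b \<in> Basis \<Longrightarrow> Ck_on k S (pd f b)"
  by (simp add: pd_def[abs_def])

lemma line_deriv:
  assumes "f differentiable (at (y + s *\<^sub>R a))"
  shows "((\<lambda>s. f (y + s *\<^sub>R a)) has_real_derivative pd f a (y + s *\<^sub>R a)) (at s)"
proof -
  have l: "linear (\<lambda>v. pd f v (y + s *\<^sub>R a))" using assms by (rule pd_linear)
  have "((\<lambda>s. y + s *\<^sub>R a) has_derivative (\<lambda>t. t *\<^sub>R a)) (at s)"
    by (auto intro!: derivative_eq_intros)
  from has_derivative_compose[OF this pd_works[OF assms]]
  have "((\<lambda>s. f (y + s *\<^sub>R a)) has_derivative (\<lambda>t. pd f (t *\<^sub>R a) (y + s *\<^sub>R a))) (at s)"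
    by (simp add: o_def)
  moreover have "(\<lambda>t. pd f (t *\<^sub>R a) (y + s *\<^sub>R a)) = (*) (pd f a (y + s *\<^sub>R a))"
    using linear_scale[OF l] by (auto simp: mult.commute)
  ultimately show ?thesis by (simp add: has_field_derivative_def)
qed

lemma delta_mvt:
  fixes f :: "'a::real_normed_vector \<Rightarrow> real"
  assumes h: "h > 0" and sub: "\<And>s t. s \<in> {0..h} \<Longrightarrow> t \<in> {0..h} \<Longrightarrow> x + s *\<^sub>R a + t *\<^sub>R b \<in> S"
    and df: "\<And>y. y \<in> S \<Longrightarrow> f differentiable (at y)"
    and dfa: "\<And>y. y \<in> S \<Longrightarrow> pd f a differentiable (at y)"
  shows "\<exists>\<xi>\<in>{0<..<h}. \<exists>\<eta>\<in>{0<..<h}. f (x + h *\<^sub>R a + h *\<^sub>R b) - f (x + h *\<^sub>R a) - f (x + h *\<^sub>R b) + f x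
     = h^2 * pd (pd f a) b (x + \<xi> *\<^sub>R a + \<eta> *\<^sub>R b)"
proof -
  define G where "G s = f ((x + h *\<^sub>R b) + s *\<^sub>R a) - f (x + s *\<^sub>R a)" for s
  have G': "(G has_real_derivative (pd f a ((x + h *\<^sub>R b) + s *\<^sub>R a) - pd f a (x + s *\<^sub>R a))) (at s)"
    if "s \<in> {0..h}" for s
  proof -
    have "(x + h *\<^sub>R b) + s *\<^sub>R a \<in> S" using sub[of s h] that h by (simp add: add_ac)
    moreover have "x + s *\<^sub>R a \<in> S" using sub[of s 0] that h by simp
    ultimately show ?thesis unfolding G_def
      by (intro derivative_intros line_deriv df)
  qed
  have G'': "(G has_derivative (\<lambda>t. (pd f a ((x + h *\<^sub>R b) + s *\<^sub>R a) - pd f a (x + s *\<^sub>R a)) * t)) (at s within {0..h})"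
    if "0 \<le> s" "s \<le> h" for s
    using G'[of s, unfolded has_field_derivative_def] that by (auto intro: has_derivative_at_withinI)
  obtain \<xi> where \<xi>: "\<xi> \<in> {0<..<h}" and e1: "G h - G 0 = (pd f a ((x + h *\<^sub>R b) + \<xi> *\<^sub>R a) - pd f a (x + \<xi> *\<^sub>R a)) * (h - 0)"
    using mvt_simple[OF h, of G "\<lambda>s t. (pd f a ((x + h *\<^sub>R b) + s *\<^sub>R a) - pd f a (x + s *\<^sub>R a)) * t", OF G''] 
    by auto
  define H where "H t = pd f a ((x + \<xi> *\<^sub>R a) + t *\<^sub>R b)" for t
  have H': "(H has_real_derivative pd (pd f a) b ((x + \<xi> *\<^sub>R a) + t *\<^sub>R b)) (at t)" if "t \<in> {0..h}" for t
    unfolding H_def using sub[of \<xi> t] that \<xi> by (intro line_deriv dfa) auto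
  have H'': "(H has_derivative (\<lambda>t. pd (pd f a) b ((x + \<xi> *\<^sub>R a) + s *\<^sub>R b) * t)) (at s within {0..h})"
    if "0 \<le> s" "s \<le> h" for s
    using H'[of s, unfolded has_field_derivative_def] that by (auto intro: has_derivative_at_withinI)
  obtain \<eta> where \<eta>: "\<eta> \<in> {0<..<h}" and e2: "H h - H 0 = pd (pd f a) b ((x + \<xi> *\<^sub>R a) + \<eta> *\<^sub>R b) * (h - 0)"
    using mvt_simple[OF h, of H "\<lambda>s t. pd (pd f a) b ((x + \<xi> *\<^sub>R a) + s *\<^sub>R b) * t", OF H'']
    by auto
  have "pd f a ((x + h *\<^sub>R b) + \<xi> *\<^sub>R a) - pd f a (x + \<xi> *\<^sub>R a) = H h - H 0"
    unfolding H_def by (simp add: add_ac)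
  then have "f (x + h *\<^sub>R a + h *\<^sub>R b) - f (x + h *\<^sub>R a) - f (x + h *\<^sub>R b) + f x
     = h^2 * pd (pd f a) b (x + \<xi> *\<^sub>R a + \<eta> *\<^sub>R b)"
  proof -
    have "f (x + h *\<^sub>R a + h *\<^sub>R b) - f (x + h *\<^sub>R a) - f (x + h *\<^sub>R b) + f x = G h - G 0"
      unfolding G_def by (simp add: add_ac)
    also have "\<dots> = (H h - H 0) * h" using e1 \<open>pd f a ((x + h *\<^sub>R b) + \<xi> *\<^sub>R a) - pd f a (x + \<xi> *\<^sub>R a) = H h - H 0\<close> by simp
    also have "\<dots> = h^2 * pd (pd f a) b (x + \<xi> *\<^sub>R a + \<eta> *\<^sub>R b)" using e2 by (simp add: power2_eq_square)
    finally show ?thesis .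
  qed
  then show ?thesis using \<xi> \<eta> by blast
qed

lemma schwarz:
  fixes f :: "'a::real_normed_vector \<Rightarrow> real"
  assumes S: "open S" "x \<in> S"
    and df: "\<And>y. y \<in> S \<Longrightarrow> f differentiable (at y)"
    and dfa: "\<And>y. y \<in> S \<Longrightarrow> pd f a differentiable (at y)"
    and dfb: "\<And>y. y \<in> S \<Longrightarrow> pd f b differentiable (at y)"
    and ca: "continuous_on S (pd (pd f a) b)"
    and cb: "continuous_on S (pd (pd f b) a)"
  shows "pd (pd f a) b x = pd (pd f b) a x"
proof (rule ccontr)
  let ?A = "pd (pd f a) b x" and ?B = "pd (pd f b) a x"
  assume ne: "?A \<noteq> ?B"
  define e where "e = \<bar>?A - ?B\<bar> / 2"
  have e: "e > 0" using ne by (simp add: e_def)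
  obtain r where r: "r > 0" "ball x r \<subseteq> S" using S open_contains_ball by blast
  obtain d1 where d1: "d1 > 0" "\<And>y. y \<in> S \<Longrightarrow> dist y x < d1 \<Longrightarrow> dist (pd (pd f a) b y) ?A < e"
    using ca S(2) e unfolding continuous_on_iff by metis
  obtain d2 where d2: "d2 > 0" "\<And>y. y \<in> S \<Longrightarrow> dist y x < d2 \<Longrightarrow> dist (pd (pd f b) a y) ?B < e"
    using cb S(2) e unfolding continuous_on_iff by metis
  define M where "M = norm a + norm b + 1"
  have M: "M > 0" unfolding M_def by (simp add: add_nonneg_pos)
  define h where "h = min r (min d1 d2) / (2 * M)"
  have h: "h > 0" using r d1 d2 M by (simp add: h_def)
  have close: "dist (x + s *\<^sub>R u + t *\<^sub>R w) x < min r (min d1 d2)"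
    if "s \<in> {0..h}" "t \<in> {0..h}" "(u = a \<and> w = b) \<or> (u = b \<and> w = a)" for s t u w
  proof -
    have "dist (x + s *\<^sub>R u + t *\<^sub>R w) x = norm (s *\<^sub>R u + t *\<^sub>R w)" by (simp add: dist_norm)
    also have "\<dots> \<le> s * norm u + t * norm w"
      using that by (auto intro!: order_trans[OF norm_triangle_ineq])
    also have "\<dots> \<le> h * norm u + h * norm w"
      using that by (auto intro!: add_mono mult_right_mono)
    also have "\<dots> < h * (2 * M)"
    proof -
      have "h * norm u + h * norm w = h * norm a + h * norm b" using that(3) by auto
      moreover have "0 \<le> h * norm a" "0 \<le> h * norm b" using h by auto
      moreover have "h * (2 * M) = 2 * (h * norm a) + 2 * (h * norm b) + 2 * h" by (simp add: M_def algebra_simps)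
      ultimately show ?thesis using h by linarith
    qed
    also have "\<dots> = min r (min d1 d2)" using M by (simp add: h_def)
    finally show ?thesis .
  qed
  have inS: "x + s *\<^sub>R u + t *\<^sub>R w \<in> S"
    if "s \<in> {0..h}" "t \<in> {0..h}" "(u = a \<and> w = b) \<or> (u = b \<and> w = a)" for s t u w
    using close[OF that] r by (auto simp: dist_commute)
  obtain \<xi> \<eta> where xe: "\<xi> \<in> {0<..<h}" "\<eta> \<in> {0<..<h}" and
    E1: "f (x + h *\<^sub>R a + h *\<^sub>R b) - f (x + h *\<^sub>R a) - f (x + h *\<^sub>R b) + f x
     = h^2 * pd (pd f a) b (x + \<xi> *\<^sub>R a + \<eta> *\<^sub>R b)"
    using delta_mvt[OF h, of x a b S f] inS df dfa by blast
  obtain \<xi>' \<eta>' where xe': "\<xi>' \<in> {0<..<h}" "\<eta>' \<in> {0<..<h}" and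
    E2: "f (x + h *\<^sub>R b + h *\<^sub>R a) - f (x + h *\<^sub>R b) - f (x + h *\<^sub>R a) + f x
     = h^2 * pd (pd f b) a (x + \<xi>' *\<^sub>R b + \<eta>' *\<^sub>R a)"
    using delta_mvt[OF h, of x b a S f] inS df dfb by blast
  have "f (x + h *\<^sub>R b + h *\<^sub>R a) = f (x + h *\<^sub>R a + h *\<^sub>R b)" by (simp add: add_ac)
  then have "h^2 * pd (pd f a) b (x + \<xi> *\<^sub>R a + \<eta> *\<^sub>R b) = h^2 * pd (pd f b) a (x + \<xi>' *\<^sub>R b + \<eta>' *\<^sub>R a)"
    using E1 E2 by linarith
  then have eq: "pd (pd f a) b (x + \<xi> *\<^sub>R a + \<eta> *\<^sub>R b) = pd (pd f b) a (x + \<xi>' *\<^sub>R b + \<eta>' *\<^sub>R a)"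
    using h by simp
  have c1: "dist (pd (pd f a) b (x + \<xi> *\<^sub>R a + \<eta> *\<^sub>R b)) ?A < e"
    using xe close[of \<xi> \<eta> a b] inS[of \<xi> \<eta> a b] by (intro d1(2)) auto
  have c2: "dist (pd (pd f b) a (x + \<xi>' *\<^sub>R b + \<eta>' *\<^sub>R a)) ?B < e"
    using xe' close[of \<xi>' \<eta>' b a] inS[of \<xi>' \<eta>' b a] by (intro d2(2)) auto
  from c1 c2 eq have "\<bar>?A - ?B\<bar> < 2 * e" by (simp add: dist_real_def)
  then show False by (simp add: e_def)
qed


lemma pd_zero_open:
  assumes "open U" "x \<in> U" "\<And>y. y \<in> U \<Longrightarrow> g y = 0"
  shows "pd g v x = 0" "g differentiable (at x)"
proof -
  have "(g has_derivative (\<lambda>h. 0)) (at x)"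
    using has_derivative_transform_within_open[OF has_derivative_const[of 0] assms(1,2)] assms(3) by auto
  then show "pd g v x = 0" "g differentiable (at x)"
    by (auto simp: pd_has differentiable_def)
qed

lemma norm_in_box:
  fixes y :: "'a::euclidean_space"
  assumes "norm (y - c) \<le> M"
  shows "y \<in> cbox (c - M *\<^sub>R One) (c + M *\<^sub>R One)"
  unfolding mem_box
proof (intro ballI conjI)
  fix i :: 'a assume i: "i \<in> Basis"
  have "\<bar>(y - c) \<bullet> i\<bar> \<le> M" using Basis_le_norm[OF i, of "y - c"] assms by linarith
  then show "(c - M *\<^sub>R One) \<bullet> i \<le> y \<bullet> i" "y \<bullet> i \<le> (c + M *\<^sub>R One) \<bullet> i"
    using i by (auto simp: inner_diff_left inner_add_left)
qed

lemma ibp: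
  fixes g :: "'a::euclidean_space \<Rightarrow> real"
  assumes dg: "\<And>x. g differentiable (at x)" and cg: "continuous_on UNIV (pd g b)"
    and K: "compact K" and z: "\<And>x. x \<notin> K \<Longrightarrow> g x = 0"
  shows "(pd g b has_integral 0) UNIV"
proof -
  have oK: "open (- K)" using K compact_imp_closed by blast
  have pz: "pd g b x = 0" if "x \<notin> K" for x
    using pd_zero_open(1)[OF oK, of x g b] z that by auto
  have gc: "continuous_on UNIV g"
    using dg by (meson continuous_at_imp_continuous_on differentiable_imp_continuous_within)
  obtain R where R: "\<forall>x\<in>K. norm x \<le> R"
    using compact_imp_bounded[OF K] bounded_iff by blast
  define M where "M = R + norm b + 1"
  define lo :: 'a where "lo = 0 - M *\<^sub>R One"
  define hi :: 'a where "hi = 0 + M *\<^sub>R One"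
  have Kn: "norm x \<le> R" if "x \<in> K" for x using R that by blast
  define I where "I = integral (cbox lo hi) g"
  have gI: "(g has_integral I) (cbox lo hi)"
    unfolding I_def by (intro integrable_integral integrable_continuous continuous_on_subset[OF gc]) auto
  have KB: "K \<subseteq> cbox lo hi"
  proof
    fix x assume "x \<in> K" then have "norm x \<le> R" by (rule Kn)
    then have "norm (x - 0) \<le> M" using norm_ge_zero[of b] unfolding M_def diff_zero by linarith
    then show "x \<in> cbox lo hi" unfolding lo_def hi_def by (rule norm_in_box)
  qed
  have gU: "(g has_integral I) UNIV"
    by (rule has_integral_on_superset[OF gI]) (use KB z in auto)
  have Fconst: "integral (cbox lo hi) (\<lambda>x. g (x + s *\<^sub>R b)) = I" if s: "s \<in> ball 0 1" for s :: real
  proof -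
    let ?c = "s *\<^sub>R b"
    have KB': "K \<subseteq> cbox (lo + ?c) (hi + ?c)"
    proof
      fix x assume "x \<in> K"
      have "norm (x - ?c) \<le> norm x + norm ?c" by (rule norm_triangle_ineq4)
      also have "\<dots> \<le> R + norm b" using Kn[OF \<open>x \<in> K\<close>] s
        by (auto intro!: add_mono mult_left_le_one_le simp: dist_norm)
      finally have "norm (x - ?c) \<le> M" by (simp add: M_def)
      then show "x \<in> cbox (lo + ?c) (hi + ?c)"
        using norm_in_box[of x ?c M] unfolding lo_def hi_def by (simp add: algebra_simps)
    qed
    have "((\<lambda>x. if x \<in> cbox (lo + ?c) (hi + ?c) then g x else 0) has_integral I) UNIV"
      using gU by (rule has_integral_cong[THEN iffD1, rotated]) (use KB' z in auto)
    then have "(g has_integral I) (cbox (lo + ?c) (hi + ?c))"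
      by (simp add: has_integral_restrict_UNIV)
    then have "((g \<circ> (+) ?c) has_integral I) (cbox lo hi)"
      by (simp add: has_integral_shift_cbox_iff)
    then show ?thesis by (simp add: o_def add.commute integral_unique)
  qed
  have L: "((\<lambda>s. integral (cbox lo hi) (\<lambda>x. g (x + s *\<^sub>R b))) has_vector_derivative
      integral (cbox lo hi) (\<lambda>x. pd g b (x + 0 *\<^sub>R b))) (at 0 within ball 0 1)"
  proof (rule leibniz_rule_vector_derivative[where fx="\<lambda>s x. pd g b (x + s *\<^sub>R b)"])
    fix s :: real and x :: 'a
    show "((\<lambda>s. g (x + s *\<^sub>R b)) has_vector_derivative pd g b (x + s *\<^sub>R b)) (at s within ball 0 1)"
      using line_deriv[where f=g and y=x and s=s and a=b, OF dg]
      by (auto simp: has_real_derivative_iff_has_vector_derivative intro: has_vector_derivative_at_within)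
  next
    fix s :: real
    show "(\<lambda>x. g (x + s *\<^sub>R b)) integrable_on cbox lo hi"
      by (intro integrable_continuous continuous_on_compose2[OF gc] continuous_intros) auto
  next
    have "continuous_on (ball 0 1 \<times> cbox lo hi) (\<lambda>p. pd g b (snd p + fst p *\<^sub>R b))"
      by (intro continuous_on_compose2[OF cg] continuous_intros) auto
    then show "continuous_on (ball 0 1 \<times> cbox lo hi) (\<lambda>(s, x). pd g b (x + s *\<^sub>R b))"
      by (simp add: case_prod_beta)
  qed auto
  then have L': "((\<lambda>s. integral (cbox lo hi) (\<lambda>x. g (x + s *\<^sub>R b))) has_vector_derivative
      integral (cbox lo hi) (pd g b)) (at 0)"
    by (simp add: at_within_open[of 0 "ball 0 1"])
  have "((\<lambda>s. integral (cbox lo hi) (\<lambda>x. g (x + s *\<^sub>R b))) has_vector_derivative 0) (at 0)"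
    by (rule has_vector_derivative_transform_within_open[OF has_vector_derivative_const[of I], of "ball 0 1"])
       (auto simp: Fconst)
  with L' have i0: "integral (cbox lo hi) (pd g b) = 0" by (rule vector_derivative_unique_at)
  have "(pd g b has_integral 0) (cbox lo hi)"
    using i0 integrable_continuous[OF continuous_on_subset[OF cg]] by (metis has_integral_integral subset_UNIV)
  then show ?thesis
    by (rule has_integral_on_superset) (use KB pz in auto)
qed


type_synonym ('n, 'N) G = "('n, 'N) grp"

lemma zvec_eq: "zvec j i k = (axis j (axis i (axis k 1)), 0)"
  unfolding zvec_def by (auto simp: vec_eq_iff axis_def)

lemma zvec_Basis: "zvec j i k \<in> (Basis :: ('n::finite,'N::finite) grp set)"
  unfolding zvec_eq Basis_prod_def by (auto simp: axis_in_Basis_iff)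

lemma tvec_Basis: "tvec j \<in> (Basis :: ('n::finite,'N::finite) grp set)"
  unfolding tvec_def Basis_prod_def by (auto simp: axis_in_Basis_iff)

lemma zvec_comp[simp]: "fst (zvec j i k) $ j' $ i' $ k' = (if j' = j \<and> i' = i \<and> k' = k then 1 else 0)"
  "snd (zvec j i k) = 0"
  unfolding zvec_def by auto

lemma tvec_comp[simp]: "fst (tvec j) = 0" "snd (tvec j) $ j' = (if j' = j then 1 else 0)"
  unfolding tvec_def by (auto simp: axis_def)

definition zc :: "'N \<Rightarrow> 'n \<Rightarrow> 2 \<Rightarrow> ('n::finite,'N::finite) grp \<Rightarrow> real" where
  "zc j i k y = fst y $ j $ i $ k"

definition tc :: "'N \<Rightarrow> ('n::finite,'N::finite) grp \<Rightarrow> real" where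
  "tc j y = snd y $ j"

lemma bl_zc: "bounded_linear (zc j i k)"
  unfolding zc_def[abs_def] by (intro bounded_linear_compose[OF bounded_linear_vec_nth] bounded_linear_fst)

lemma bl_tc: "bounded_linear (tc j)"
  unfolding tc_def[abs_def] by (intro bounded_linear_compose[OF bounded_linear_vec_nth] bounded_linear_snd)

lemma diff_zc[simp]: "zc j i k differentiable (at x)"
  using bl_zc bounded_linear_imp_differentiable by blast
lemma diff_tc[simp]: "tc j differentiable (at x)"
  using bl_tc bounded_linear_imp_differentiable by blast

definition cco :: "'N \<Rightarrow> 'n \<Rightarrow> 2 \<Rightarrow> ('n::finite,'N::finite) grp \<Rightarrow> real" where
  "cco j i k y = (if k = 1 then 2 * zc j i 2 y else - 2 * zc j i 1 y)"

lemma Xf_pd: "Xf j i k f x = pd f (zvec j i k) x + cco j i k x * pd f (tvec j) x"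
  by (simp add: Xf_def pd_def cco_def zc_def)

lemma Xf_fun: "Xf j i k f = (\<lambda>y. pd f (zvec j i k) y + cco j i k y * pd f (tvec j) y)"
  by (auto simp: Xf_pd)

lemma diff_cco[simp]: "cco j i k differentiable (at x)"
  unfolding cco_def[abs_def] by (cases "k = 1") (auto intro!: differentiable_mult)

lemma C1_zc: "C1 S (zc j i k)" by (rule C1_bl[OF bl_zc])
lemma C1_tc: "C1 S (tc j)" by (rule C1_bl[OF bl_tc])
lemma C1_uminus: "C1 S f \<Longrightarrow> C1 S (\<lambda>y. - f y)"
  using C1_mult[OF C1_const[of S "-1"], of f] by simp

lemma C1_cco: "C1 S (cco j i k)"
  unfolding cco_def[abs_def] by (cases "k = 1") (auto intro!: C1_mult C1_const C1_zc C1_uminus)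

lemma Xf_add: "f differentiable (at x) \<Longrightarrow> g differentiable (at x) \<Longrightarrow>
  Xf j i k (\<lambda>y. f y + g y) x = Xf j i k f x + Xf j i k g x"
  by (simp add: Xf_pd pd_add algebra_simps)

lemma Xf_diff: "f differentiable (at x) \<Longrightarrow> g differentiable (at x) \<Longrightarrow>
  Xf j i k (\<lambda>y. f y - g y) x = Xf j i k f x - Xf j i k g x"
  by (simp add: Xf_pd pd_diff algebra_simps)

lemma Xf_mult: "f differentiable (at x) \<Longrightarrow> g differentiable (at x) \<Longrightarrow>
  Xf j i k (\<lambda>y. f y * g y) x = f x * Xf j i k g x + Xf j i k f x * g x"
  by (simp add: Xf_pd pd_mult algebra_simps)

lemma Xf_cmult: "f differentiable (at x) \<Longrightarrow> Xf j i k (\<lambda>y. c * f y) x = c * Xf j i k f x"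
  by (simp add: Xf_pd pd_cmult algebra_simps)

lemma Xf_uminus: "f differentiable (at x) \<Longrightarrow> Xf j i k (\<lambda>y. - f y) x = - Xf j i k f x"
  by (simp add: Xf_pd pd_uminus algebra_simps)

lemma Xf_const: "Xf j i k (\<lambda>y. c) x = 0"
  by (simp add: Xf_pd pd_const)

lemma Xf_comp: "(h has_real_derivative h') (at (f x)) \<Longrightarrow> f differentiable (at x) \<Longrightarrow>
  Xf j i k (\<lambda>y. h (f y)) x = h' * Xf j i k f x"
  by (simp add: Xf_pd pd_comp algebra_simps)

lemma Xf_zc: "Xf j i k (zc j' i' k') x = (if j' = j \<and> i' = i \<and> k' = k then 1 else 0)"
  by (simp add: Xf_pd pd_bl[OF bl_zc]) (simp add: zc_def)

lemma Xf_tc: "Xf j i k (tc j') x = (if j' = j then cco j i k x else 0)"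
  by (simp add: Xf_pd pd_bl[OF bl_tc]) (simp add: tc_def)

lemma Xf_sum: "finite A \<Longrightarrow> (\<And>a. a \<in> A \<Longrightarrow> f a differentiable (at x)) \<Longrightarrow>
  Xf j i k (\<lambda>y. \<Sum>a\<in>A. f a y) x = (\<Sum>a\<in>A. Xf j i k (f a) x)"
proof (induction A rule: finite_induct)
  case empty then show ?case by (simp add: Xf_const)
next
  case (insert a A)
  have "(\<lambda>y. \<Sum>a\<in>A. f a y) differentiable (at x)"
    using insert by (intro differentiable_sum) auto
  then show ?case using insert by (simp add: Xf_add)
qed


locale hs =
  fixes d :: "('n::finite,'N::finite) grp \<Rightarrow> real"
  assumes hom: "hom_norm d" and sm: "smooth_on (- {0}) d"
begin

lemma oS: "open (- {0 :: ('n,'N) grp})" by (simp add: open_Compl)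

lemma Ck2: "Ck_on (Suc (Suc 0)) (- {0}) d"
  using sm unfolding smooth_on_def by blast

lemma C1d: "C1 (- {0}) d"
  using C1_Ck[OF oS Ck2] .

lemma C1pd: "b \<in> Basis \<Longrightarrow> C1 (- {0}) (pd d b)"
  using C1_Ck[OF oS Ck_pd[OF Ck2]] .

lemma C1pdz: "C1 (- {0}) (pd d (zvec j i k))" by (rule C1pd[OF zvec_Basis])
lemma C1pdt: "C1 (- {0}) (pd d (tvec j))" by (rule C1pd[OF tvec_Basis])

lemma dpos: "x \<noteq> 0 \<Longrightarrow> d x > 0"
  using hom unfolding hom_norm_def by blast

lemma dcont: "continuous_on UNIV d"
  using hom unfolding hom_norm_def by blast

lemma diffd: "x \<noteq> 0 \<Longrightarrow> d differentiable (at x)"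
  using C1_diffE[OF C1d] by auto

lemma diffpd: "x \<noteq> 0 \<Longrightarrow> b \<in> Basis \<Longrightarrow> pd d b differentiable (at x)"
  using C1_diffE[OF C1pd] by auto

lemma schwarz_d:
  assumes "x \<noteq> 0" "a \<in> Basis" "b \<in> Basis"
  shows "pd (pd d a) b x = pd (pd d b) a x"
  by (rule schwarz[OF oS]) (use assms diffd diffpd C1_contpd[OF C1pd] in auto)

lemma Xf_d_fun1: "Xf j i 1 d = (\<lambda>y. pd d (zvec j i 1) y + 2 * zc j i 2 y * pd d (tvec j) y)"
  by (simp add: Xf_fun cco_def)
lemma Xf_d_fun2: "Xf j i 2 d = (\<lambda>y. pd d (zvec j i 2) y - 2 * zc j i 1 y * pd d (tvec j) y)"
  by (simp add: Xf_fun cco_def)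

lemma diff_Xfd: assumes "x \<noteq> 0" shows "Xf j i k d differentiable (at x)"
  unfolding Xf_fun using diffpd[OF assms zvec_Basis] diffpd[OF assms tvec_Basis]
  by (intro differentiable_add differentiable_mult) auto

lemma comm:
  assumes x: "x \<noteq> 0"
  shows "Xf j i 2 (Xf j i 1 d) x - Xf j i 1 (Xf j i 2 d) x = 4 * pd d (tvec j) x"
proof -
  let ?z1 = "zvec j i 1" and ?z2 = "zvec j i 2" and ?t = "tvec j"
  have D: "pd d b differentiable (at x)" if "b \<in> Basis" for b using diffpd[OF x that] .
  have Dz1: "pd d ?z1 differentiable (at x)" and Dz2: "pd d ?z2 differentiable (at x)"
    and Dt: "pd d ?t differentiable (at x)" by (rule D[OF zvec_Basis] D[OF zvec_Basis] D[OF tvec_Basis])+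
  have e1: "Xf j i 2 (Xf j i 1 d) x = Xf j i 2 (pd d ?z1) x + (2 * zc j i 2 x * Xf j i 2 (pd d ?t) x + 2 * pd d ?t x)"
    unfolding Xf_d_fun1
    using Dz1 Dt by (simp add: Xf_add Xf_mult Xf_cmult Xf_zc Xf_const differentiable_mult)
  have e2: "Xf j i 1 (Xf j i 2 d) x = Xf j i 1 (pd d ?z2) x - (2 * zc j i 1 x * Xf j i 1 (pd d ?t) x + 2 * pd d ?t x)"
    unfolding Xf_d_fun2
    using Dz2 Dt by (simp add: Xf_diff Xf_mult Xf_cmult Xf_zc Xf_const differentiable_mult)
  have s1: "pd (pd d ?z1) ?z2 x = pd (pd d ?z2) ?z1 x" by (rule schwarz_d[OF x zvec_Basis zvec_Basis])
  have s2: "pd (pd d ?z1) ?t x = pd (pd d ?t) ?z1 x" by (rule schwarz_d[OF x zvec_Basis tvec_Basis])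
  have s3: "pd (pd d ?z2) ?t x = pd (pd d ?t) ?z2 x" by (rule schwarz_d[OF x zvec_Basis tvec_Basis])
  show ?thesis using s1 s2 s3 by (simp only: e1 e2) (simp add: Xf_pd cco_def algebra_simps)
qed

end


lemma if_conj0: "(if P \<and> Q then x else (0::real)) = (if P then (if Q then x else 0) else 0)" by simp

lemma sum_if_out: "(\<Sum>k\<in>S. if P then A k else (0::real)) = (if P then (\<Sum>k\<in>S. A k) else 0)"
  by auto

lemma triple_delta:
  fixes f :: "'a::finite \<Rightarrow> 'b::finite \<Rightarrow> 'c::finite \<Rightarrow> real"
  shows "(\<Sum>j\<in>UNIV. \<Sum>i\<in>UNIV. \<Sum>k\<in>UNIV. f j i k * (if j' = j \<and> i' = i \<and> k' = k then 1 else 0)) = f j' i' k'"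
proof -
  have "\<And>j i k. f j i k * (if j' = j \<and> i' = i \<and> k' = k then 1 else 0) = (if j' = j then if i' = i then if k' = k then f j i k else 0 else 0 else 0)"
    by auto
  then show ?thesis by (simp only:) (simp add: sum.delta' sum_if_out)
qed

lemma single_delta:
  fixes f :: "'a::finite \<Rightarrow> real"
  shows "(\<Sum>j\<in>UNIV. f j * (if j' = j then 1 else 0)) = f j'"
proof -
  have "\<And>j. f j * (if j' = j then 1 else 0) = (if j' = j then f j else 0)" by auto
  then show ?thesis by (simp only:) (simp add: sum.delta')
qed

lemma decomp_fst: fixes x :: "('n::finite,'N::finite) grp"
  shows "fst (\<Sum>j\<in>UNIV. \<Sum>i\<in>UNIV. \<Sum>k\<in>UNIV. zc j i k x *\<^sub>R zvec j i k) $ j' $ i' $ k' = fst x $ j' $ i' $ k'"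
proof -
  have "(\<Sum>j\<in>UNIV. \<Sum>i\<in>UNIV. \<Sum>k\<in>UNIV. zc j i k x * (if j' = j \<and> i' = i \<and> k' = k then 1 else 0)) = zc j' i' k' x"
    by (rule triple_delta)
  then show ?thesis by (simp add: fst_sum sum_component zc_def)
qed

lemma decomp_snd: fixes x :: "('n::finite,'N::finite) grp"
  shows "(\<Sum>j\<in>UNIV. (c * tc j x) *\<^sub>R tvec j) = ((0::real^2^'n^'N), c *\<^sub>R snd x)"
proof -
  have "(\<Sum>j\<in>UNIV. (c * tc j x) * (if j' = j then 1 else 0)) = c * tc j' x" for j'
    by (rule single_delta)
  then show ?thesis by (simp add: prod_eq_iff vec_eq_iff fst_sum snd_sum sum_component tc_def)
qed

lemma decomp: fixes x :: "('n::finite,'N::finite) grp"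
  shows "(fst x, c *\<^sub>R snd x) = (\<Sum>j\<in>UNIV. \<Sum>i\<in>UNIV. \<Sum>k\<in>UNIV. zc j i k x *\<^sub>R zvec j i k) + (\<Sum>j\<in>UNIV. (c * tc j x) *\<^sub>R tvec j)"
  unfolding decomp_snd
  by (simp add: prod_eq_iff vec_eq_iff decomp_fst) (simp add: snd_sum)

lemma dil_der: fixes x :: "('n::finite,'N::finite) grp"
  shows "((\<lambda>r. dil r x) has_derivative (\<lambda>h. h *\<^sub>R (fst x, 2 *\<^sub>R snd x))) (at 1)"
  unfolding dil_def
  by (auto intro!: derivative_eq_intros simp: prod_eq_iff)

context hs
begin

lemma euler:
  assumes x: "x \<noteq> 0"
  shows "(\<Sum>j\<in>UNIV. \<Sum>i\<in>UNIV. \<Sum>k\<in>UNIV. zc j i k x * pd d (zvec j i k) x) + 2 * (\<Sum>j\<in>UNIV. tc j x * pd d (tvec j) x) = d x"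
proof -
  have hd: "(d has_derivative (\<lambda>v. pd d v x)) (at x)" using pd_works[OF diffd[OF x]] .
  have l: "linear (\<lambda>v. pd d v x)" using pd_linear[OF diffd[OF x]] .
  have d1: "dil 1 x = x" by (simp add: dil_def)
  have c1: "((\<lambda>r. d (dil r x)) has_derivative (\<lambda>h. pd d (h *\<^sub>R (fst x, 2 *\<^sub>R snd x)) x)) (at 1)"
    using has_derivative_compose[OF dil_der[of x], of d "\<lambda>v. pd d v x"] hd d1 by simp
  have hom': "\<And>r. r > 0 \<Longrightarrow> d (dil r x) = r * d x" using hom unfolding hom_norm_def by blast
  have c0: "((\<lambda>r. r * d x) has_derivative (\<lambda>h. h * d x)) (at 1)"
    by (auto intro!: derivative_eq_intros)
  have c2: "((\<lambda>r. d (dil r x)) has_derivative (\<lambda>h. h * d x)) (at 1)"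
    by (rule has_derivative_transform_within_open[OF c0, of "{0<..}"]) (auto simp: hom')
  have "(\<lambda>h. pd d (h *\<^sub>R (fst x, 2 *\<^sub>R snd x)) x) = (\<lambda>h. h * d x)"
    by (rule has_derivative_unique[OF c1 c2])
  from fun_cong[OF this, of 1] have e: "pd d (fst x, 2 *\<^sub>R snd x) x = d x" by simp
  show ?thesis
    using e unfolding decomp[of x 2]
    by (simp add: linear_add[OF l] linear_sum[OF l] linear_scale[OF l] sum_distrib_left mult.assoc)
qed

end


definition Pc :: "(('n::finite,'N::finite) grp \<Rightarrow> real) \<Rightarrow> 'N \<Rightarrow> 'n \<Rightarrow> 2 \<Rightarrow> ('n,'N) grp \<Rightarrow> real" where
  "Pc d j i k y = (if k = 1 then - Xf j i 2 d y else Xf j i 1 d y)"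

definition Wc :: "real \<Rightarrow> real \<Rightarrow> (('n::finite,'N::finite) grp \<Rightarrow> real) \<Rightarrow> 'N \<Rightarrow> 'n \<Rightarrow> 2 \<Rightarrow> ('n,'N) grp \<Rightarrow> real" where
  "Wc p \<theta> d j i k y = ((real CARD('n) + 1) / real CARD('n)) * (d y powr (- (p * \<theta>)) * zc j i k y)
     - (p * \<theta> / (2 * real CARD('n))) * (d y powr (-1 - p * \<theta>) * (tc j y * Pc d j i k y))"

context hs
begin

lemma diff_powr_d: "x \<noteq> 0 \<Longrightarrow> (\<lambda>y. d y powr q) differentiable (at x)"
  by (rule differentiable_comp_real[OF has_real_derivative_powr[OF dpos] diffd])

lemma Xf_powr_d: "x \<noteq> 0 \<Longrightarrow> Xf j i k (\<lambda>y. d y powr q) x = q * d x powr (q - 1) * Xf j i k d x"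
  by (rule Xf_comp[OF has_real_derivative_powr[OF dpos] diffd])

lemma Pc1: "Pc d j i 1 = (\<lambda>y. - Xf j i 2 d y)" by (simp add: Pc_def[abs_def])
lemma Pc2: "Pc d j i 2 = Xf j i 1 d" by (simp add: Pc_def[abs_def])

lemma diff_Pc: assumes x: "x \<noteq> 0" shows "Pc d j i k differentiable (at x)"
proof (cases "k = 1")
  case True then show ?thesis using diff_Xfd[OF x] by (simp add: Pc1 differentiable_minus)
next
  case False then have "k = 2" using exhaust_2[of k] by auto
  then show ?thesis using diff_Xfd[OF x] by (simp add: Pc2)
qed

lemma XW_gen:
  assumes x: "x \<noteq> 0"
  shows "Xf j i k (\<lambda>y. a * (d y powr q * zc j i k y) - b * (d y powr r * (tc j y * Pc d j i k y))) x =
    a * (q * d x powr (q - 1) * Xf j i k d x * zc j i k x + d x powr q)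
    - b * (r * d x powr (r - 1) * Xf j i k d x * (tc j x * Pc d j i k x)
        + d x powr r * (cco j i k x * Pc d j i k x + tc j x * Xf j i k (Pc d j i k) x))"
proof -
  note D = diff_powr_d[OF x] diff_Pc[OF x] diff_zc diff_tc
  have d1: "(\<lambda>y. d y powr q * zc j i k y) differentiable (at x)" using D by (intro differentiable_mult) auto
  have d2: "(\<lambda>y. tc j y * Pc d j i k y) differentiable (at x)" using D by (intro differentiable_mult) auto
  have d3: "(\<lambda>y. d y powr r * (tc j y * Pc d j i k y)) differentiable (at x)" using D d2 by (intro differentiable_mult) auto
  have e1: "Xf j i k (\<lambda>y. a * (d y powr q * zc j i k y) - b * (d y powr r * (tc j y * Pc d j i k y))) x
     = a * Xf j i k (\<lambda>y. d y powr q * zc j i k y) x - b * Xf j i k (\<lambda>y. d y powr r * (tc j y * Pc d j i k y)) x"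
    using d1 d3 by (simp add: Xf_diff Xf_cmult differentiable_mult)
  have e2: "Xf j i k (\<lambda>y. d y powr q * zc j i k y) x = d x powr q * 1 + (q * d x powr (q - 1) * Xf j i k d x) * zc j i k x"
    using D by (simp add: Xf_mult Xf_powr_d[OF x] Xf_zc)
  have e3: "Xf j i k (\<lambda>y. d y powr r * (tc j y * Pc d j i k y)) x =
     d x powr r * (tc j x * Xf j i k (Pc d j i k) x + cco j i k x * Pc d j i k x) + (r * d x powr (r - 1) * Xf j i k d x) * (tc j x * Pc d j i k x)"
    using D d2 by (simp add: Xf_mult Xf_powr_d[OF x] Xf_tc)
  show ?thesis unfolding e1 e2 e3 by (simp add: algebra_simps)
qed

end


context hs
begin

lemma divW_ji:
  assumes x: "x \<noteq> 0"
  shows "Xf j i 1 (Wc p \<theta> d j i 1) x + Xf j i 2 (Wc p \<theta> d j i 2) x =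
    2 * ((real CARD('n) + 1) / real CARD('n)) * d x powr (- (p * \<theta>))
    - p * \<theta> * d x powr (-1 - p * \<theta>) * (zc j i 1 x * pd d (zvec j i 1) x + zc j i 2 x * pd d (zvec j i 2) x)
    - (2 * p * \<theta> / real CARD('n)) * d x powr (-1 - p * \<theta>) * tc j x * pd d (tvec j) x"
proof -
  define n where "n = real CARD('n)"
  have n: "n > 0" unfolding n_def by simp
  define e where "e = d x powr (- (p * \<theta>))"
  define g where "g = d x powr (-1 - p * \<theta>)"
  define \<gamma> where "\<gamma> = d x powr (-1 - p * \<theta> - 1)"
  have eg: "d x powr (- (p * \<theta>) - 1) = g" unfolding g_def by (rule arg_cong[where f="\<lambda>u. d x powr u"]) simp
  define z1 where "z1 = zc j i 1 x"
  define z2 where "z2 = zc j i 2 x"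
  define t where "t = tc j x"
  define pz1 where "pz1 = pd d (zvec j i 1) x"
  define pz2 where "pz2 = pd d (zvec j i 2) x"
  define pt where "pt = pd d (tvec j) x"
  define C1 where "C1 = Xf j i 1 (Xf j i 2 d) x"
  have X1: "Xf j i 1 d x = pz1 + 2 * z2 * pt" by (simp add: Xf_pd cco_def pz1_def z2_def pt_def)
  have X2: "Xf j i 2 d x = pz2 - 2 * z1 * pt" by (simp add: Xf_pd cco_def pz2_def z1_def pt_def)
  have c1: "cco j i 1 x = 2 * z2" by (simp add: cco_def z2_def)
  have c2: "cco j i 2 x = - 2 * z1" by (simp add: cco_def z1_def)
  have P1: "Pc d j i 1 x = - (pz2 - 2 * z1 * pt)" using X2 by (simp add: Pc_def)
  have P2: "Pc d j i 2 x = pz1 + 2 * z2 * pt" using X1 by (simp add: Pc_def)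
  have XP1: "Xf j i 1 (Pc d j i 1) x = - C1"
    unfolding Pc1 C1_def by (rule Xf_uminus[OF diff_Xfd[OF x]])
  have XP2: "Xf j i 2 (Pc d j i 2) x = C1 + 4 * pt"
    unfolding Pc2 C1_def pt_def using comm[OF x, of j i] by simp
  have W: "Wc p \<theta> d j i k = (\<lambda>y. ((n + 1) / n) * (d y powr (- (p * \<theta>)) * zc j i k y) - (p * \<theta> / (2 * n)) * (d y powr (-1 - p * \<theta>) * (tc j y * Pc d j i k y)))" for k
    unfolding Wc_def[abs_def] n_def ..
  show ?thesis
    unfolding W XW_gen[OF x] n_def[symmetric] e_def[symmetric] g_def[symmetric] \<gamma>_def[symmetric] eg
      z1_def[symmetric] z2_def[symmetric] t_def[symmetric] pz1_def[symmetric] pz2_def[symmetric] pt_def[symmetric]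
      X1 X2 c1 c2 P1 P2 XP1 XP2
    using n by (simp add: field_simps)
qed

lemma divW:
  assumes x: "x \<noteq> 0"
  shows "(\<Sum>j\<in>UNIV. \<Sum>i\<in>UNIV. \<Sum>k\<in>UNIV. Xf j i k (Wc p \<theta> d j i k) x)
    = (2 * real CARD('N) * (real CARD('n) + 1) - p * \<theta>) * d x powr (- (p * \<theta>))"
proof -
  define n where "n = real CARD('n)"
  have n: "n > 0" unfolding n_def by simp
  define e where "e = d x powr (- (p * \<theta>))"
  define g where "g = d x powr (-1 - p * \<theta>)"
  have gd: "g * d x = e"
  proof -
    have "g * d x = d x powr (-1 - p * \<theta>) * d x powr 1" using dpos[OF x] by (simp add: g_def)
    also have "\<dots> = d x powr (-1 - p * \<theta> + 1)" by (simp only: powr_add[symmetric])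
    also have "\<dots> = e" unfolding e_def by (rule arg_cong[where f="\<lambda>u. d x powr u"]) simp
    finally show ?thesis .
  qed
  define S where "S j i = zc j i 1 x * pd d (zvec j i 1) x + zc j i 2 x * pd d (zvec j i 2) x" for j i
  define T where "T j = tc j x * pd d (tvec j) x" for j
  have E: "(\<Sum>j\<in>UNIV. \<Sum>i\<in>UNIV. S j i) + 2 * (\<Sum>j\<in>UNIV. T j) = d x"
    using euler[OF x] unfolding S_def T_def by (simp add: sum_2)
  have "(\<Sum>j\<in>UNIV. \<Sum>i\<in>UNIV. \<Sum>k\<in>UNIV. Xf j i k (Wc p \<theta> d j i k) x)
     = (\<Sum>j\<in>UNIV. \<Sum>i\<in>UNIV. 2 * ((n + 1) / n) * e - p * \<theta> * g * S j i - (2 * p * \<theta> / n) * g * T j)"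
    unfolding sum_2 divW_ji[OF x] n_def e_def g_def S_def T_def by (simp add: mult.assoc)
  also have "\<dots> = (\<Sum>j\<in>UNIV. n * (2 * ((n + 1) / n) * e) - p * \<theta> * g * (\<Sum>i\<in>UNIV. S j i) - n * ((2 * p * \<theta> / n) * g * T j))"
    by (simp add: sum_subtractf sum_distrib_left n_def)
  also have "\<dots> = (\<Sum>j\<in>UNIV. 2 * (n + 1) * e - p * \<theta> * g * (\<Sum>i\<in>UNIV. S j i) - 2 * p * \<theta> * g * T j)"
    by (intro sum.cong refl) (use n in \<open>simp add: field_simps\<close>)
  also have "\<dots> = real CARD('N) * (2 * (n + 1) * e) - p * \<theta> * g * ((\<Sum>j\<in>UNIV. \<Sum>i\<in>UNIV. S j i) + 2 * (\<Sum>j\<in>UNIV. T j))"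
    by (simp add: sum_subtractf sum_distrib_left sum_distrib_right sum.distrib algebra_simps)
  also have "\<dots> = real CARD('N) * (2 * (n + 1) * e) - p * \<theta> * e"
    unfolding E using gd by (simp add: algebra_simps)
  finally show ?thesis unfolding n_def e_def by (simp add: algebra_simps)
qed

end


lemma C1_glue: "open S \<Longrightarrow> open T \<Longrightarrow> C1 S f \<Longrightarrow> C1 T f \<Longrightarrow> C1 (S \<union> T) f"
  unfolding C1_def by (auto intro: continuous_on_open_Un)

lemma cont_zero_open: "open T \<Longrightarrow> (\<And>x. x \<in> T \<Longrightarrow> f x = 0) \<Longrightarrow> continuous_on T f"
  using continuous_on_cong[of T T f "\<lambda>x. 0"] by simp

lemma C1_UNIV_cs:
  assumes S: "open S" and K: "compact K" "K \<subseteq> S" and f: "C1 S f" and z: "\<And>x. x \<notin> K \<Longrightarrow> f x = 0"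
  shows "C1 UNIV f"
proof -
  have oK: "open (- K)" using compact_imp_closed[OF K(1)] by (simp add: open_Compl)
  have "C1 (- K) f" by (rule C1_cong[OF oK C1_const]) (use z in auto)
  moreover have "S \<union> - K = UNIV" using K by auto
  ultimately show ?thesis using C1_glue[OF S oK f] by metis
qed

lemma cont_UNIV_cs:
  fixes f :: "'a::real_normed_vector \<Rightarrow> real"
  assumes S: "open S" and K: "compact K" "K \<subseteq> S" and f: "continuous_on S f" and z: "\<And>x. x \<notin> K \<Longrightarrow> f x = 0"
  shows "continuous_on UNIV f"
proof -
  have oK: "open (- K)" using compact_imp_closed[OF K(1)] by (simp add: open_Compl)
  have "continuous_on (- K) f" by (rule cont_zero_open[OF oK]) (use z in auto)
  moreover have "S \<union> - K = UNIV" using K by auto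
  ultimately show ?thesis using continuous_on_open_Un[OF S oK f] by metis
qed

lemma integrable_cs:
  fixes f :: "'a::euclidean_space \<Rightarrow> real"
  assumes f: "continuous_on UNIV f" and K: "compact K" and z: "\<And>x. x \<notin> K \<Longrightarrow> f x = 0"
  shows "f integrable_on UNIV"
proof -
  obtain a where a: "K \<subseteq> cbox (-a) a" using bounded_subset_cbox_symmetric[OF compact_imp_bounded[OF K]] by blast
  have "f integrable_on cbox (-a) a" by (rule integrable_continuous[OF continuous_on_subset[OF f]]) auto
  then have "(f has_integral integral (cbox (-a) a) f) (cbox (-a) a)" by (rule integrable_integral)
  then have "(f has_integral integral (cbox (-a) a) f) UNIV"
    by (rule has_integral_on_superset) (use a z in auto)
  then show ?thesis by blast
qed

definition psi :: "real \<Rightarrow> real \<Rightarrow> real" where "psi p s = \<bar>s\<bar> powr p"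
definition dpsi :: "real \<Rightarrow> real \<Rightarrow> real" where "dpsi p s = p * sgn s * \<bar>s\<bar> powr (p - 1)"

lemma abs_powr_tendsto0:
  assumes "q > 0" shows "((\<lambda>y::real. \<bar>y\<bar> powr q) \<longlongrightarrow> 0) (at 0)"
proof (rule tendsto_zero_powrI)
  show "((\<lambda>y::real. \<bar>y\<bar>) \<longlongrightarrow> 0) (at 0)"
    using tendsto_rabs[OF tendsto_ident_at[of 0 UNIV]] by simp
qed (use assms in auto)

lemma psi_deriv:
  assumes p: "p > 1"
  shows "(psi p has_real_derivative dpsi p s) (at s)"
proof -
  consider "s > 0" | "s < 0" | "s = 0" by linarith
  then show ?thesis
  proof cases
    case 1
    have "((\<lambda>y. y powr p) has_real_derivative p * s powr (p - 1)) (at s)"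
      by (rule has_real_derivative_powr[OF 1])
    then have "((\<lambda>y. y powr p) has_real_derivative dpsi p s) (at s)"
      using 1 by (simp add: dpsi_def)
    then show ?thesis
      by (rule has_field_derivative_transform_within_open[of _ _ _ "{0<..}"]) (use 1 in \<open>auto simp: psi_def\<close>)
  next
    case 2
    have m: "((\<lambda>y. - y) has_real_derivative - 1) (at s)" by (auto intro!: derivative_eq_intros)
    have "((\<lambda>y. (- y) powr p) has_real_derivative (p * (- s) powr (p - 1) * (- 1))) (at s)"
      using DERIV_chain2[OF has_real_derivative_powr[of "- s" p] m] 2 by simp
    then have "((\<lambda>y. (- y) powr p) has_real_derivative dpsi p s) (at s)"
      using 2 by (simp add: dpsi_def)
    then show ?thesis
      by (rule has_field_derivative_transform_within_open[of _ _ _ "{..<0}"]) (use 2 in \<open>auto simp: psi_def\<close>)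
  next
    case 3
    have ev: "\<forall>\<^sub>F y in at (0::real). \<bar>y\<bar> powr (p - 1) = \<bar>(psi p y - psi p 0) / (y - 0)\<bar>"
    proof -
      have "\<bar>y\<bar> powr (p - 1) = \<bar>(psi p y - psi p 0) / (y - 0)\<bar>" if "y \<noteq> 0" for y :: real
        using that by (simp add: psi_def powr_diff abs_divide)
      then show ?thesis unfolding eventually_at_filter by (intro always_eventually) auto
    qed
    have "((\<lambda>y. \<bar>(psi p y - psi p 0) / (y - 0)\<bar>) \<longlongrightarrow> 0) (at 0)"
      by (rule Lim_transform_eventually[OF abs_powr_tendsto0 ev]) (use p in auto)
    then have "((\<lambda>y. (psi p y - psi p 0) / (y - 0)) \<longlongrightarrow> dpsi p 0) (at 0)"
      by (simp add: dpsi_def tendsto_rabs_zero_cancel del: diff_0_right)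
    then show ?thesis using 3 by (simp add: has_field_derivative_iff del: diff_0_right)
  qed
qed

lemma dpsi_cont:
  assumes p: "p > 1"
  shows "continuous_on UNIV (dpsi p)"
proof (rule continuous_at_imp_continuous_on, intro ballI)
  fix s :: real assume "s \<in> UNIV"
  show "isCont (dpsi p) s"
  proof (cases "s = 0")
    case False
    have c1: "isCont (\<lambda>y::real. sgn y) s" by (rule isCont_sgn[OF continuous_ident]) (use False in auto)
    have "continuous_on UNIV (\<lambda>y::real. \<bar>y\<bar> powr (p - 1))"
      by (rule continuous_on_powr') (use p in \<open>auto intro: continuous_intros\<close>)
    then have c2: "isCont (\<lambda>y::real. \<bar>y\<bar> powr (p - 1)) s"
      by (simp add: continuous_on_eq_continuous_at)
    have "isCont (\<lambda>y. p * sgn y * \<bar>y\<bar> powr (p - 1)) s"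
      by (intro isCont_mult c1 c2 continuous_const)
    then show ?thesis by (simp add: dpsi_def[abs_def])
  next
    case True
    have lim: "((\<lambda>y. p * \<bar>y\<bar> powr (p - 1)) \<longlongrightarrow> 0) (at 0)"
      using tendsto_mult_left[OF abs_powr_tendsto0, of "p - 1" p] p by simp
    have eq: "(\<lambda>y. \<bar>dpsi p y\<bar>) = (\<lambda>y. p * \<bar>y\<bar> powr (p - 1))"
    proof
      fix y :: real show "\<bar>dpsi p y\<bar> = p * \<bar>y\<bar> powr (p - 1)"
        using p by (cases "y = 0") (auto simp: dpsi_def abs_mult sgn_if)
    qed
    have "((\<lambda>y. \<bar>dpsi p y\<bar>) \<longlongrightarrow> 0) (at 0)" unfolding eq by (rule lim)
    then have L: "(dpsi p \<longlongrightarrow> 0) (at 0)"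
      by (rule tendsto_rabs_zero_cancel)
    have "dpsi p 0 = 0" by (simp add: dpsi_def)
    then show ?thesis using True L unfolding isCont_def by simp
  qed
qed


lemma pd_cco_t: "pd (cco j i k) (tvec j') x = 0"
proof -
  obtain c m where cm: "cco j i k = (\<lambda>y. c * zc j i m y)"
  proof (cases "k = 1")
    case True
    then have "cco j i k = (\<lambda>y. 2 * zc j i 2 y)" by (auto simp: cco_def[abs_def])
    then show ?thesis by (rule that)
  next
    case False
    then have "cco j i k = (\<lambda>y. (-2) * zc j i 1 y)" by (auto simp: cco_def[abs_def])
    then show ?thesis by (rule that)
  qed
  have "pd (cco j i k) (tvec j') x = c * pd (zc j i m) (tvec j') x"
    unfolding cm by (rule pd_cmult[OF diff_zc])
  also have "\<dots> = 0" by (simp add: pd_bl[OF bl_zc]) (simp add: zc_def)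
  finally show ?thesis .
qed

lemma C1_subset: "C1 T f \<Longrightarrow> S \<subseteq> T \<Longrightarrow> C1 S f"
  unfolding C1_def by (auto intro: continuous_on_subset)

lemma has_integral_sum0:
  fixes f :: "'b \<Rightarrow> 'a::euclidean_space \<Rightarrow> real"
  shows "finite A \<Longrightarrow> (\<And>a. a \<in> A \<Longrightarrow> (f a has_integral 0) S) \<Longrightarrow> ((\<lambda>x. \<Sum>a\<in>A. f a x) has_integral 0) S"
  using has_integral_sum[of A f "\<lambda>_. 0" S] by simp

lemma ibp_X:
  fixes g :: "('n::finite,'N::finite) grp \<Rightarrow> real"
  assumes g: "C1 UNIV g" and K: "compact K" and z: "\<And>x. x \<notin> K \<Longrightarrow> g x = 0"
  shows "(Xf j i k g has_integral 0) UNIV"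
proof -
  have cg: "C1 UNIV (\<lambda>y. cco j i k y * g y)" by (rule C1_mult[OF C1_cco g])
  have i1: "(pd g (zvec j i k) has_integral 0) UNIV"
    by (rule ibp[OF _ C1_contpd[OF g] K z]) (use C1_diffE[OF g] in auto)
  have i2: "(pd (\<lambda>y. cco j i k y * g y) (tvec j) has_integral 0) UNIV"
    by (rule ibp[OF _ C1_contpd[OF cg] K]) (use C1_diffE[OF cg] z in auto)
  have eq: "Xf j i k g x = pd g (zvec j i k) x + pd (\<lambda>y. cco j i k y * g y) (tvec j) x" for x
    using C1_diffE[OF g] by (simp add: Xf_pd pd_mult pd_cco_t)
  show ?thesis using has_integral_add[OF i1 i2] by (simp add: eq[abs_def])
qed

locale hsu = hs d for d :: "('n::finite,'N::finite) grp \<Rightarrow> real" +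
  fixes u :: "('n,'N) grp \<Rightarrow> real" and p \<theta> :: real
  assumes p2: "p \<ge> 2" and cu: "Cc_inf (- {0}) u"
begin

definition KK where "KK = closure {x. u x \<noteq> 0}"

lemma K_compact: "compact KK" using cu unfolding Cc_inf_def KK_def by blast
lemma K_sub: "KK \<subseteq> - {0}" using cu unfolding Cc_inf_def KK_def by blast
lemma K0: "0 \<notin> KK" using K_sub by blast
lemma u_zero: assumes "x \<notin> KK" shows "u x = 0"
proof (rule ccontr)
  assume "u x \<noteq> 0"
  then have "x \<in> {x. u x \<noteq> 0}" by simp
  then have "x \<in> KK" unfolding KK_def using closure_subset[of "{x. u x \<noteq> 0}"] by (rule subsetD[rotated])
  then show False using assms by simp
qed
lemma u0: "u 0 = 0" using u_zero K0 by blast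

lemma C1u: "C1 UNIV u"
proof -
  have "Ck_on (Suc 0) (- {0}) u" using cu unfolding Cc_inf_def smooth_on_def by blast
  then have "C1 (- {0}) u" by (rule C1_Ck[OF oS])
  then show ?thesis by (rule C1_UNIV_cs[OF oS K_compact K_sub]) (rule u_zero)
qed

definition phi where "phi y = psi p (u y)"

lemma p1: "p > 1" using p2 by simp

lemma C1phi: "C1 UNIV phi"
  unfolding phi_def[abs_def]
  by (rule C1_comp[OF C1u, of "psi p" "dpsi p"]) (use psi_deriv[OF p1] continuous_on_subset[OF dpsi_cont[OF p1]] in auto)

lemma phi_zero: "x \<notin> KK \<Longrightarrow> phi x = 0" by (simp add: phi_def psi_def u_zero)

lemma C1_dpowr: "C1 (- {0}) (\<lambda>y. d y powr q)"
proof (rule C1_comp[OF C1d, of "\<lambda>s. s powr q" "\<lambda>s. q * s powr (q - 1)"])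
  show "((\<lambda>s. s powr q) has_real_derivative q * d x powr (q - 1)) (at (d x))" if "x \<in> - {0}" for x
    using has_real_derivative_powr[OF dpos] that by auto
  have "\<forall>y\<in>d ` (- {0}). y \<noteq> 0"
  proof
    fix y assume "y \<in> d ` (- {0})"
    then obtain x where x: "x \<noteq> 0" "y = d x" by blast
    then show "y \<noteq> 0" using dpos[OF x(1)] by linarith
  qed
  then show "continuous_on (d ` (- {0})) (\<lambda>s. q * s powr (q - 1))"
    by (intro continuous_on_mult[OF continuous_on_const] continuous_on_powr[OF continuous_on_id continuous_on_const])
qed

lemma C1_Xfd: "C1 (- {0}) (Xf j i k d)"
  unfolding Xf_fun by (intro C1_add C1_mult C1_cco C1pdz C1pdt)

lemma C1_Pc: "C1 (- {0}) (Pc d j i k)"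
proof (cases "k = 1")
  case True then show ?thesis by (simp add: Pc1 C1_uminus C1_Xfd)
next
  case False then have "k = 2" using exhaust_2[of k] by auto
  then show ?thesis by (simp add: Pc2 C1_Xfd)
qed

lemma C1_Wc: "C1 (- {0}) (Wc p \<theta> d j i k)"
  unfolding Wc_def[abs_def]
  by (intro C1_diff C1_mult C1_const C1_dpowr C1_zc C1_tc C1_Pc)

definition Gf where "Gf j i k y = phi y * Wc p \<theta> d j i k y"

lemma C1_Gf: "C1 UNIV (Gf j i k)"
  unfolding Gf_def[abs_def]
  by (rule C1_UNIV_cs[OF oS K_compact K_sub]) (auto intro!: C1_mult C1_Wc C1_subset[OF C1phi] simp: phi_zero)

lemma Gf_zero: "x \<notin> KK \<Longrightarrow> Gf j i k x = 0" by (simp add: Gf_def phi_zero)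

lemma int_divG: "((\<lambda>x. \<Sum>j\<in>UNIV. \<Sum>i\<in>UNIV. \<Sum>k\<in>UNIV. Xf j i k (Gf j i k) x) has_integral 0) UNIV"
  by (intro has_integral_sum0 ibp_X[OF C1_Gf K_compact Gf_zero]) auto

end


lemma Zcomp: "Zfield p \<theta> d x $ j $ i $ k =
   ((real CARD('n) + 1) / real CARD('n)) * ((1 / d x) * zc j i k x)
   - (p * \<theta> / (2 * real CARD('n))) * ((1 / (d x)^2) * (tc j x * Pc d j i k x))"
  for d :: "('n::finite,'N::finite) grp \<Rightarrow> real"
proof -
  have s: "(\<Sum>j'\<in>UNIV. snd x $ j' *\<^sub>R hperp j' d x) $ j $ i $ k = tc j x * Pc d j i k x"
  proof -
    have "(\<Sum>j'\<in>UNIV. snd x $ j' *\<^sub>R hperp j' d x) $ j $ i $ k = (\<Sum>j'\<in>UNIV. snd x $ j' * hperp j' d x $ j $ i $ k)"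
      by (simp add: sum_component)
    also have "\<dots> = (\<Sum>j'\<in>UNIV. if j' = j then snd x $ j' * Pc d j i k x else 0)"
      by (intro sum.cong refl) (simp add: hperp_def Pc_def)
    also have "\<dots> = tc j x * Pc d j i k x" by (simp add: tc_def)
    finally show ?thesis .
  qed
  show ?thesis unfolding Zfield_def using s by (simp add: zc_def)
qed

lemma inner_expand: "(a :: real^2^'n^'N) \<bullet> b = (\<Sum>j\<in>UNIV. \<Sum>i\<in>UNIV. \<Sum>k\<in>UNIV. a $ j $ i $ k * b $ j $ i $ k)"
  by (simp add: inner_vec_def)

context hsu
begin

lemma powr_aux:
  assumes "D > 0"
  shows "D powr (- (p * \<theta>)) = D powr (1 - p * \<theta>) * (1 / D)"
    "D powr (-1 - p * \<theta>) = D powr (1 - p * \<theta>) * (1 / D^2)"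
proof -
  have "D powr (- (p * \<theta>)) * D powr 1 = D powr (- (p * \<theta>) + 1)" by (simp only: powr_add[symmetric])
  also have "\<dots> = D powr (1 - p * \<theta>)" by (rule arg_cong[where f="\<lambda>u. D powr u"]) simp
  finally show "D powr (- (p * \<theta>)) = D powr (1 - p * \<theta>) * (1 / D)" using assms by (simp add: field_simps)
  have "D powr (-1 - p * \<theta>) * D powr 2 = D powr (-1 - p * \<theta> + 2)" by (simp only: powr_add[symmetric])
  also have "\<dots> = D powr (1 - p * \<theta>)" by (rule arg_cong[where f="\<lambda>u. D powr u"]) simp
  finally show "D powr (-1 - p * \<theta>) = D powr (1 - p * \<theta>) * (1 / D^2)" using assms by (simp add: field_simps)
qed

lemma Wc_Z: "x \<noteq> 0 \<Longrightarrow> Wc p \<theta> d j i k x = d x powr (1 - p * \<theta>) * Zfield p \<theta> d x $ j $ i $ k"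
  unfolding Wc_def Zcomp using powr_aux[OF dpos] by (simp add: algebra_simps)

lemma diff_u: "u differentiable (at x)" using C1_diffE[OF C1u] by simp
lemma diff_phi: "phi differentiable (at x)" using C1_diffE[OF C1phi] by simp
lemma diff_Wc: "x \<noteq> 0 \<Longrightarrow> Wc p \<theta> d j i k differentiable (at x)" using C1_diffE[OF C1_Wc] by simp

lemma pointwise:
  "(\<Sum>j\<in>UNIV. \<Sum>i\<in>UNIV. \<Sum>k\<in>UNIV. Xf j i k (Gf j i k) x) =
     dpsi p (u x) * (d x powr (1 - p * \<theta>) * (hgrad u x \<bullet> Zfield p \<theta> d x))
     + (2 * real CARD('N) * (real CARD('n) + 1) - p * \<theta>) * (\<bar>u x\<bar> powr p / d x powr (p * \<theta>))"
proof (cases "x = 0")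
  case True
  have oK: "open (- KK)" using compact_imp_closed[OF K_compact] by (simp add: open_Compl)
  have "Xf j i k (Gf j i k) x = 0" for j i k
    using pd_zero_open[OF oK, of x "Gf j i k"] Gf_zero True K0 by (simp add: Xf_pd)
  then show ?thesis using True by (simp add: u0 dpsi_def)
next
  case False
  have X: "Xf j i k (Gf j i k) x = phi x * Xf j i k (Wc p \<theta> d j i k) x + dpsi p (u x) * (Xf j i k u x * Wc p \<theta> d j i k x)" for j i k
  proof -
    have "Xf j i k (Gf j i k) x = phi x * Xf j i k (Wc p \<theta> d j i k) x + Xf j i k phi x * Wc p \<theta> d j i k x"
      unfolding Gf_def[abs_def] by (rule Xf_mult[OF diff_phi diff_Wc[OF False]])
    moreover have "Xf j i k phi x = dpsi p (u x) * Xf j i k u x"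
      unfolding phi_def[abs_def] by (rule Xf_comp[OF psi_deriv[OF p1] diff_u])
    ultimately show ?thesis by simp
  qed
  have "(\<Sum>j\<in>UNIV. \<Sum>i\<in>UNIV. \<Sum>k\<in>UNIV. Xf j i k (Gf j i k) x) =
      phi x * (\<Sum>j\<in>UNIV. \<Sum>i\<in>UNIV. \<Sum>k\<in>UNIV. Xf j i k (Wc p \<theta> d j i k) x)
      + dpsi p (u x) * (d x powr (1 - p * \<theta>) * (\<Sum>j\<in>UNIV. \<Sum>i\<in>UNIV. \<Sum>k\<in>UNIV. Xf j i k u x * Zfield p \<theta> d x $ j $ i $ k))"
    unfolding X Wc_Z[OF False] by (simp add: sum.distrib sum_distrib_left algebra_simps)
  also have "\<dots> = dpsi p (u x) * (d x powr (1 - p * \<theta>) * (hgrad u x \<bullet> Zfield p \<theta> d x))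
     + (2 * real CARD('N) * (real CARD('n) + 1) - p * \<theta>) * (\<bar>u x\<bar> powr p / d x powr (p * \<theta>))"
    unfolding divW[OF False] inner_expand by (simp add: hgrad_def phi_def psi_def powr_minus_divide)
  finally show ?thesis .
qed

end


lemma powr_exp_cong: "a = b \<Longrightarrow> (x::real) powr a = x powr b" by simp

lemma young_pt:
  fixes p \<mu> U D w \<theta> :: real
  assumes p: "p > 1" and mu: "\<mu> > 0" and U: "U > 0" and D: "D > 0" and w: "w \<ge> 0"
  shows "p * U powr (p - 1) * D powr (1 - p * \<theta>) * w
     \<le> (p - 1) * \<mu> * (U powr p / D powr (p * \<theta>)) + \<mu> powr (1 - p) * (w powr p / D powr (p * (\<theta> - 1)))"
proof -
  define P where "P = p / (p - 1)"
  have P: "P > 1" using p by (simp add: P_def)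
  have PP: "1 / P + 1 / p = 1" using p by (simp add: P_def field_simps)
  define A0 where "A0 = \<mu> powr ((p - 1) / p) * U powr (p - 1) * D powr (- ((p - 1) * \<theta>))"
  define B0 where "B0 = \<mu> powr (- ((p - 1) / p)) * w * D powr (1 - \<theta>)"
  have A0: "A0 \<ge> 0" unfolding A0_def by simp
  have B0: "B0 \<ge> 0" unfolding B0_def using w by simp
  have Y: "A0 * B0 \<le> A0 powr P / P + B0 powr p / p"
    by (rule Youngs_inequality[OF P p PP A0 B0])
  have AB: "A0 * B0 = U powr (p - 1) * D powr (1 - p * \<theta>) * w"
  proof -
    have m: "\<mu> powr ((p - 1) / p) * \<mu> powr (- ((p - 1) / p)) = 1"
      using mu by (simp add: powr_add[symmetric])
    have dd: "D powr (- ((p - 1) * \<theta>)) * D powr (1 - \<theta>) = D powr (1 - p * \<theta>)"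
      by (simp only: powr_add[symmetric]) (rule powr_exp_cong, simp add: algebra_simps)
    have "A0 * B0 = (\<mu> powr ((p - 1) / p) * \<mu> powr (- ((p - 1) / p))) * U powr (p - 1) * (D powr (- ((p - 1) * \<theta>)) * D powr (1 - \<theta>)) * w"
      unfolding A0_def B0_def by (simp add: algebra_simps)
    then show ?thesis unfolding m dd by simp
  qed
  have AP: "A0 powr P = \<mu> * (U powr p / D powr (p * \<theta>))"
  proof -
    have "A0 powr P = (\<mu> powr ((p - 1) / p)) powr P * (U powr (p - 1)) powr P * (D powr (- ((p - 1) * \<theta>))) powr P"
      unfolding A0_def by (simp add: powr_mult)
    also have "\<dots> = \<mu> powr ((p - 1) / p * P) * U powr ((p - 1) * P) * D powr (- ((p - 1) * \<theta>) * P)"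
      by (simp add: powr_powr)
    also have "\<dots> = \<mu> powr 1 * U powr p * D powr (- (p * \<theta>))"
      using p by (intro arg_cong2[where f="(*)"] powr_exp_cong) (auto simp: P_def field_simps)
    also have "\<dots> = \<mu> * (U powr p / D powr (p * \<theta>))"
      using mu by (simp add: powr_minus_divide)
    finally show ?thesis .
  qed
  have BP: "B0 powr p = \<mu> powr (1 - p) * (w powr p / D powr (p * (\<theta> - 1)))"
  proof -
    have "B0 powr p = (\<mu> powr (- ((p - 1) / p))) powr p * w powr p * (D powr (1 - \<theta>)) powr p"
      unfolding B0_def using w by (simp add: powr_mult)
    also have "\<dots> = \<mu> powr (- ((p - 1) / p) * p) * w powr p * D powr ((1 - \<theta>) * p)"
      by (simp add: powr_powr)
    also have "\<dots> = \<mu> powr (1 - p) * w powr p * D powr (- (p * (\<theta> - 1)))"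
      using p by (intro arg_cong2[where f="(*)"] powr_exp_cong) (auto simp: field_simps)
    also have "\<dots> = \<mu> powr (1 - p) * (w powr p / D powr (p * (\<theta> - 1)))"
      by (simp add: powr_minus_divide)
    finally show ?thesis .
  qed
  have "p * (A0 * B0) \<le> p * (A0 powr P / P + B0 powr p / p)"
    using Y p by simp
  also have "\<dots> = (p / P) * A0 powr P + B0 powr p" using p by (simp add: field_simps)
  also have "p / P = p - 1" using p by (simp add: P_def)
  finally show ?thesis unfolding AB AP BP by (simp add: algebra_simps)
qed


context hsu
begin

definition aa where "aa x = \<bar>u x\<bar> powr p / d x powr (p * \<theta>)"
definition ip where "ip x = hgrad u x \<bullet> Zfield p \<theta> d x"
definition bb where "bb x = \<bar>ip x\<bar> powr p / d x powr (p * (\<theta> - 1))"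
definition hh where "hh x = dpsi p (u x) * (d x powr (1 - p * \<theta>) * ip x)"

lemma oK: "open (- KK)" using compact_imp_closed[OF K_compact] by (simp add: open_Compl)

lemma Xfu_zero: "x \<notin> KK \<Longrightarrow> Xf j i k u x = 0"
  using pd_zero_open(1)[OF oK, of x u] u_zero by (simp add: Xf_pd)

lemma ip_zero: "x \<notin> KK \<Longrightarrow> ip x = 0"
  by (simp add: ip_def inner_expand hgrad_def Xfu_zero)

lemma aa_zero: "x \<notin> KK \<Longrightarrow> aa x = 0" by (simp add: aa_def u_zero)
lemma bb_zero: "x \<notin> KK \<Longrightarrow> bb x = 0" using p1 by (simp add: bb_def ip_zero)

lemma aa_nonneg: "aa x \<ge> 0" by (simp add: aa_def)
lemma bb_nonneg: "bb x \<ge> 0" by (simp add: bb_def)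

lemma dnz: "\<forall>x\<in>- {0}. d x \<noteq> 0"
proof
  fix x :: "('n,'N) grp" assume "x \<in> - {0}"
  then have "x \<noteq> 0" by simp
  from dpos[OF this] show "d x \<noteq> 0" by linarith
qed

lemma cont_dS: "continuous_on (- {0}) d" using continuous_on_subset[OF dcont] by blast

lemma cont_Xfu: "continuous_on UNIV (Xf j i k u)"
  unfolding Xf_fun by (intro continuous_intros C1_contpd[OF C1u] C1_cont[OF C1_cco])

lemma ip_expand: "ip x = (\<Sum>j\<in>UNIV. \<Sum>i\<in>UNIV. \<Sum>k\<in>UNIV. Xf j i k u x *
   (((real CARD('n) + 1) / real CARD('n)) * ((1 / d x) * zc j i k x)
   - (p * \<theta> / (2 * real CARD('n))) * ((1 / (d x)^2) * (tc j x * Pc d j i k x))))"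
  by (simp add: ip_def inner_expand hgrad_def Zcomp)

lemma cont_ip: "continuous_on (- {0}) ip"
proof -
  have "continuous_on (- {0}) (\<lambda>x. \<Sum>j\<in>UNIV. \<Sum>i\<in>UNIV. \<Sum>k\<in>UNIV. Xf j i k u x *
   (((real CARD('n) + 1) / real CARD('n)) * ((1 / d x) * zc j i k x)
   - (p * \<theta> / (2 * real CARD('n))) * ((1 / (d x)^2) * (tc j x * Pc d j i k x))))"
    using dnz by (intro continuous_intros continuous_on_subset[OF cont_Xfu] cont_dS
        C1_cont[OF C1_zc] C1_cont[OF C1_tc] C1_cont[OF C1_Pc]) auto
  then show ?thesis by (simp add: ip_expand[abs_def])
qed

lemma powr_nz: "x \<in> - {0} \<Longrightarrow> d x powr a \<noteq> 0" using dnz by simp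

lemma cont_aa: "continuous_on UNIV aa"
proof (rule cont_UNIV_cs[OF oS K_compact K_sub _ aa_zero])
  show "continuous_on (- {0}) aa"
    unfolding aa_def[abs_def] using p1 powr_nz
    by (intro continuous_on_divide continuous_on_powr' continuous_on_powr continuous_intros
        continuous_on_subset[OF C1_cont[OF C1u]] cont_dS) (auto simp: dnz)
qed

lemma cont_bb: "continuous_on UNIV bb"
proof (rule cont_UNIV_cs[OF oS K_compact K_sub _ bb_zero])
  show "continuous_on (- {0}) bb"
    unfolding bb_def[abs_def] using p1 powr_nz
    by (intro continuous_on_divide continuous_on_powr' continuous_on_powr continuous_intros
        cont_ip cont_dS) (auto simp: dnz)
qed

lemma aa_int: "aa integrable_on UNIV" by (rule integrable_cs[OF cont_aa K_compact aa_zero])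
lemma bb_int: "bb integrable_on UNIV" by (rule integrable_cs[OF cont_bb K_compact bb_zero])

lemma hh_int: "(hh has_integral - (((2 * real CARD('N) * (real CARD('n) + 1)) - p * \<theta>) * integral UNIV aa)) UNIV"
proof -
  have "((\<lambda>x. hh x + ((2 * real CARD('N) * (real CARD('n) + 1)) - p * \<theta>) * aa x) has_integral 0) UNIV"
    using int_divG unfolding pointwise hh_def[symmetric] aa_def[symmetric] ip_def[symmetric] .
  moreover have "((\<lambda>x. ((2 * real CARD('N) * (real CARD('n) + 1)) - p * \<theta>) * aa x) has_integral ((2 * real CARD('N) * (real CARD('n) + 1)) - p * \<theta>) * integral UNIV aa) UNIV"
    by (rule has_integral_mult_right[OF integrable_integral[OF aa_int]])
  ultimately have "((\<lambda>x. (hh x + ((2 * real CARD('N) * (real CARD('n) + 1)) - p * \<theta>) * aa x) - ((2 * real CARD('N) * (real CARD('n) + 1)) - p * \<theta>) * aa x) has_integral 0 - ((2 * real CARD('N) * (real CARD('n) + 1)) - p * \<theta>) * integral UNIV aa) UNIV"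
    by (rule has_integral_diff)
  then show ?thesis by simp
qed

lemma hh_bound:
  assumes mu: "\<mu> > 0"
  shows "\<bar>hh x\<bar> \<le> (p - 1) * \<mu> * aa x + \<mu> powr (1 - p) * bb x"
proof (cases "u x = 0")
  case True
  then have "hh x = 0" by (simp add: hh_def dpsi_def)
  moreover have "0 \<le> (p - 1) * \<mu> * aa x + \<mu> powr (1 - p) * bb x"
    using p1 mu aa_nonneg bb_nonneg by (intro add_nonneg_nonneg mult_nonneg_nonneg) auto
  ultimately show ?thesis by simp
next
  case False
  then have x: "x \<noteq> 0" using u0 by auto
  have U: "\<bar>u x\<bar> > 0" using False by simp
  have "\<bar>hh x\<bar> = p * \<bar>u x\<bar> powr (p - 1) * d x powr (1 - p * \<theta>) * \<bar>ip x\<bar>"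
    using False p1 by (simp add: hh_def dpsi_def abs_mult sgn_if)
  also have "\<dots> \<le> (p - 1) * \<mu> * (\<bar>u x\<bar> powr p / d x powr (p * \<theta>)) + \<mu> powr (1 - p) * (\<bar>ip x\<bar> powr p / d x powr (p * (\<theta> - 1)))"
    by (rule young_pt[OF p1 mu U dpos[OF x]]) simp
  finally show ?thesis by (simp add: aa_def bb_def)
qed

lemma key:
  "(\<bar>(2 * real CARD('N) * (real CARD('n) + 1)) - p * \<theta>\<bar> / p) powr p * integral UNIV aa \<le> integral UNIV bb"
proof -
  define A where "A = integral UNIV aa"
  define B where "B = integral UNIV bb"
  define c where "c = \<bar>(2 * real CARD('N) * (real CARD('n) + 1)) - p * \<theta>\<bar> / p"
  have A: "A \<ge> 0" unfolding A_def by (rule Henstock_Kurzweil_Integration.integral_nonneg[OF aa_int aa_nonneg])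
  have B: "B \<ge> 0" unfolding B_def by (rule Henstock_Kurzweil_Integration.integral_nonneg[OF bb_int bb_nonneg])
  have c: "c \<ge> 0" unfolding c_def using p1 by simp
  have gen: "\<bar>(2 * real CARD('N) * (real CARD('n) + 1)) - p * \<theta>\<bar> * A \<le> (p - 1) * \<mu> * A + \<mu> powr (1 - p) * B" if mu: "\<mu> > 0" for \<mu>
  proof -
    have ih: "integral UNIV hh = - (((2 * real CARD('N) * (real CARD('n) + 1)) - p * \<theta>) * A)" using hh_int unfolding A_def by (rule integral_unique)
    have i1: "(\<lambda>x. (p - 1) * \<mu> * aa x) integrable_on UNIV"
      using integrable_on_cmult_left[OF aa_int, of "(p - 1) * \<mu>"] by simp
    have i2: "(\<lambda>x. \<mu> powr (1 - p) * bb x) integrable_on UNIV"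
      using integrable_on_cmult_left[OF bb_int, of "\<mu> powr (1 - p)"] by simp
    have bi: "(\<lambda>x. (p - 1) * \<mu> * aa x + \<mu> powr (1 - p) * bb x) integrable_on UNIV"
      by (rule integrable_add[OF i1 i2])
    have "\<bar>(2 * real CARD('N) * (real CARD('n) + 1)) - p * \<theta>\<bar> * A = norm (integral UNIV hh)" unfolding ih using A by (simp add: abs_mult)
    also have "\<dots> \<le> integral UNIV (\<lambda>x. (p - 1) * \<mu> * aa x + \<mu> powr (1 - p) * bb x)"
      by (rule Henstock_Kurzweil_Integration.integral_norm_bound_integral[OF _ bi])
         (use hh_int hh_bound[OF mu] in auto)
    also have "\<dots> = (p - 1) * \<mu> * A + \<mu> powr (1 - p) * B"
      unfolding A_def B_def by (simp add: integral_add[OF i1 i2] integral_mult_right)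
    finally show ?thesis .
  qed
  show ?thesis
  proof (cases "c = 0")
    case True then show ?thesis using B p1 by (simp add: c_def[symmetric] B_def[symmetric])
  next
    case False
    then have cp: "c > 0" using c by simp
    have "p * c * A \<le> (p - 1) * c * A + c powr (1 - p) * B"
      using gen[OF cp] p1 unfolding c_def by (simp add: field_simps)
    then have "c * A \<le> c powr (1 - p) * B" by (simp add: algebra_simps)
    then have "c powr (p - 1) * (c * A) \<le> c powr (p - 1) * (c powr (1 - p) * B)"
      by (rule mult_left_mono) simp
    moreover have "c powr (p - 1) * c powr (1 - p) = 1"
      using cp by (simp add: powr_add[symmetric])
    moreover have "c powr (p - 1) * c = c powr p"
    proof -
      have "c powr (p - 1) * c powr 1 = c powr (p - 1 + 1)" by (simp only: powr_add[symmetric])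
      then show ?thesis using cp by simp
    qed
    ultimately have "c powr p * A \<le> B" by (simp add: mult.assoc[symmetric])
    then show ?thesis unfolding c_def A_def B_def .
  qed
qed

end


theorem theorem4p2:
  fixes d u :: "('n::finite,'N::finite) grp \<Rightarrow> real"
    and p \<theta> :: real
  assumes "hom_norm d"
    and "smooth_on (- {0}) d"
    and "p \<ge> 2"
    and "Cc_inf (- {0}) u"
  shows "(\<integral>\<^sup>+ x. ennreal (\<bar>hgrad u x \<bullet> Zfield p \<theta> d x\<bar> powr p / d x powr (p * (\<theta> - 1))) \<partial>lborel)
     \<ge> ennreal (\<bar>(2 * real CARD('N) * (real CARD('n) + 1) - p * \<theta>) / p\<bar> powr p)
       * (\<integral>\<^sup>+ x. ennreal (\<bar>u x\<bar> powr p / d x powr (p * \<theta>)) \<partial>lborel)"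
proof -
  interpret hsu d u p \<theta> by unfold_locales (use assms in auto)
  have nb: "(\<integral>\<^sup>+ x. ennreal (bb x) \<partial>lborel) = ennreal (integral UNIV bb)"
    using nn_integral_has_integral_lebesgue'[of UNIV bb "integral UNIV bb"] bb_nonneg integrable_integral[OF bb_int]
    by simp
  have na: "(\<integral>\<^sup>+ x. ennreal (aa x) \<partial>lborel) = ennreal (integral UNIV aa)"
    using nn_integral_has_integral_lebesgue'[of UNIV aa "integral UNIV aa"] aa_nonneg integrable_integral[OF aa_int]
    by simp
  have A: "integral UNIV aa \<ge> 0" by (rule Henstock_Kurzweil_Integration.integral_nonneg[OF aa_int aa_nonneg])
  have cc: "\<bar>(2 * real CARD('N) * (real CARD('n) + 1) - p * \<theta>) / p\<bar> = \<bar>2 * real CARD('N) * (real CARD('n) + 1) - p * \<theta>\<bar> / p"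
    using assms(3) by (simp add: abs_divide)
  have "ennreal (\<bar>(2 * real CARD('N) * (real CARD('n) + 1) - p * \<theta>) / p\<bar> powr p) * ennreal (integral UNIV aa)
      = ennreal ((\<bar>2 * real CARD('N) * (real CARD('n) + 1) - p * \<theta>\<bar> / p) powr p * integral UNIV aa)"
    unfolding cc using A by (simp add: ennreal_mult'')
  also have "\<dots> \<le> ennreal (integral UNIV bb)"
    by (rule ennreal_leI[OF key])
  finally have fin: "ennreal (\<bar>(2 * real CARD('N) * (real CARD('n) + 1) - p * \<theta>) / p\<bar> powr p) * (\<integral>\<^sup>+ x. ennreal (aa x) \<partial>lborel)
      \<le> (\<integral>\<^sup>+ x. ennreal (bb x) \<partial>lborel)" unfolding na nb .
  have e1: "(\<integral>\<^sup>+ x. ennreal (\<bar>hgrad u x \<bullet> Zfield p \<theta> d x\<bar> powr p / d x powr (p * (\<theta> - 1))) \<partial>lborel)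
     = (\<integral>\<^sup>+ x. ennreal (bb x) \<partial>lborel)" by (simp add: bb_def ip_def)
  have e2: "(\<integral>\<^sup>+ x. ennreal (\<bar>u x\<bar> powr p / d x powr (p * \<theta>)) \<partial>lborel)
     = (\<integral>\<^sup>+ x. ennreal (aa x) \<partial>lborel)" by (simp add: aa_def)
  show ?thesis unfolding e1 e2 using fin by simp
qed


end
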